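(* Let $k$ be an infinite $C_1$-field with $\operatorname{char} k\neq 2$ which is not algebraically closed. Let $a,b,c,d\in k$ with $a\in k\setminus k^2$, $b\neq 0$, and at least one of $c,d$ non-zero, and let $L_0=k(t_1,t_2,t_3,t_4)$ be a field extension of $k$ with $\operatorname{trdeg}_k(L_0)=2$ whose generators satisfy $t_1^2-at_2^2=b$ and $t_3^2-at_4^2=2ct_1+d$. Then $L_0$ is $k$-rational.
   Context: A field $k$ is a $C_1$-field if every homogeneous polynomial $f\in k[x_1,\dots,x_n]$ of degree less than $n$ has a non-trivial zero in $k^n$. A field extension is $k$-rational if it is purely transcendental over $k$. *)

theory Defs
  imports "HOL-Computational_Algebra.Polynomial"
begin

text \<open>Fields are modelled as subfields of an ambient field type.\<close>

definition subfield :: "'a::field set \<Rightarrow> bool" where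
  "subfield K \<longleftrightarrow> 0 \<in> K \<and> 1 \<in> K \<and>
     (\<forall>x\<in>K. \<forall>y\<in>K. x + y \<in> K \<and> x - y \<in> K \<and> x * y \<in> K) \<and>
     (\<forall>x\<in>K. inverse x \<in> K)"

definition gen_field :: "'a::field set \<Rightarrow> 'a set \<Rightarrow> 'a set" where
  "gen_field K S = \<Inter>{F. subfield F \<and> K \<union> S \<subseteq> F}"

definition homog_monos :: "nat \<Rightarrow> nat \<Rightarrow> (nat \<Rightarrow> nat) set" where
  "homog_monos n d = {\<alpha>. (\<forall>i\<ge>n. \<alpha> i = 0) \<and> sum \<alpha> {..<n} = d}"

definition C1_field :: "'a::field set \<Rightarrow> bool" where
  "C1_field K \<longleftrightarrow> (\<forall>n d (c :: (nat \<Rightarrow> nat) \<Rightarrow> 'a).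
     1 \<le> d \<and> d < n \<and> (\<forall>\<alpha>. c \<alpha> \<in> K) \<longrightarrow>
     (\<exists>x :: nat \<Rightarrow> 'a. (\<forall>i<n. x i \<in> K) \<and> (\<exists>i<n. x i \<noteq> 0) \<and>
        (\<Sum>\<alpha>\<in>homog_monos n d. c \<alpha> * (\<Prod>i<n. x i ^ \<alpha> i)) = 0))"

definition alg_closed_in :: "'a::field set \<Rightarrow> bool" where
  "alg_closed_in K \<longleftrightarrow> (\<forall>p :: 'a poly. set (coeffs p) \<subseteq> K \<and> degree p \<ge> 1 \<longrightarrow>
     (\<exists>x\<in>K. poly p x = 0))"

definition mono_eval :: "(nat \<Rightarrow> nat) \<Rightarrow> 'a::field list \<Rightarrow> 'a" where
  "mono_eval \<alpha> xs = (\<Prod>i<length xs. (xs ! i) ^ (\<alpha> i))"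

definition alg_indep :: "'a::field set \<Rightarrow> 'a list \<Rightarrow> bool" where
  "alg_indep K xs \<longleftrightarrow> (\<forall>(A :: (nat \<Rightarrow> nat) set) c.
     finite A \<and> (\<forall>\<alpha>\<in>A. \<forall>i\<ge>length xs. \<alpha> i = 0) \<and> (\<forall>\<alpha>\<in>A. c \<alpha> \<in> K) \<and>
     (\<Sum>\<alpha>\<in>A. c \<alpha> * mono_eval \<alpha> xs) = 0 \<longrightarrow> (\<forall>\<alpha>\<in>A. c \<alpha> = 0))"

definition algebraic_over :: "'a::field set \<Rightarrow> 'a \<Rightarrow> bool" where
  "algebraic_over F y \<longleftrightarrow> (\<exists>p :: 'a poly. p \<noteq> 0 \<and> set (coeffs p) \<subseteq> F \<and> poly p y = 0)"

definition has_trdeg :: "'a::field set \<Rightarrow> 'a set \<Rightarrow> nat \<Rightarrow> bool" where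
  "has_trdeg K L n \<longleftrightarrow> (\<exists>xs. length xs = n \<and> set xs \<subseteq> L \<and> alg_indep K xs \<and>
     (\<forall>y\<in>L. algebraic_over (gen_field K (set xs)) y))"

definition k_rational :: "'a::field set \<Rightarrow> 'a set \<Rightarrow> bool" where
  "k_rational K L \<longleftrightarrow> (\<exists>xs. alg_indep K xs \<and> L = gen_field K (set xs))"

end

theory Submission
  imports Defs
begin


lemma sf_0: "subfield F \<Longrightarrow> 0 \<in> F" by (simp add: subfield_def)
lemma sf_1: "subfield F \<Longrightarrow> 1 \<in> F" by (simp add: subfield_def)
lemma sf_add: "subfield F \<Longrightarrow> x \<in> F \<Longrightarrow> y \<in> F \<Longrightarrow> x + y \<in> F" by (simp add: subfield_def)
lemma sf_diff: "subfield F \<Longrightarrow> x \<in> F \<Longrightarrow> y \<in> F \<Longrightarrow> x - y \<in> F" by (simp add: subfield_def)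
lemma sf_mult: "subfield F \<Longrightarrow> x \<in> F \<Longrightarrow> y \<in> F \<Longrightarrow> x * y \<in> F" by (simp add: subfield_def)
lemma sf_inverse: "subfield F \<Longrightarrow> x \<in> F \<Longrightarrow> inverse x \<in> F" by (simp add: subfield_def)
lemma sf_divide: "subfield F \<Longrightarrow> x \<in> F \<Longrightarrow> y \<in> F \<Longrightarrow> x / y \<in> F"
  by (simp add: divide_inverse sf_mult sf_inverse)
lemma sf_uminus: "subfield F \<Longrightarrow> x \<in> F \<Longrightarrow> - x \<in> F"
  using sf_diff[of F 0 x] sf_0[of F] by simp
lemma sf_power: "subfield F \<Longrightarrow> x \<in> F \<Longrightarrow> x ^ n \<in> F"
  by (induction n) (auto simp: sf_1 sf_mult)
lemma sf_2: "subfield F \<Longrightarrow> 2 \<in> F"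
  by (metis one_add_one sf_add sf_1)
lemma sf_sum: "subfield F \<Longrightarrow> (\<And>x. x \<in> A \<Longrightarrow> f x \<in> F) \<Longrightarrow> sum f A \<in> F"
  by (induction A rule: infinite_finite_induct) (auto simp: sf_0 sf_add)
lemma sf_prod: "subfield F \<Longrightarrow> (\<And>x. x \<in> A \<Longrightarrow> f x \<in> F) \<Longrightarrow> prod f A \<in> F"
  by (induction A rule: infinite_finite_induct) (auto simp: sf_1 sf_mult)

lemmas sf_rules = sf_add sf_diff sf_mult sf_divide sf_uminus sf_power sf_inverse

lemma subfield_Inter: "(\<And>F. F \<in> S \<Longrightarrow> subfield F) \<Longrightarrow> subfield (\<Inter>S)"
  unfolding subfield_def by blast

lemma gen_field_sf: "subfield (gen_field K S)"
  unfolding gen_field_def by (rule subfield_Inter) auto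

lemma subfield_UNIV: "subfield UNIV" by (simp add: subfield_def)

lemma gen_field_K: "K \<subseteq> gen_field K S"
  unfolding gen_field_def by auto
lemma gen_field_S: "S \<subseteq> gen_field K S"
  unfolding gen_field_def by auto
lemma gen_field_min: "subfield F \<Longrightarrow> K \<subseteq> F \<Longrightarrow> S \<subseteq> F \<Longrightarrow> gen_field K S \<subseteq> F"
  unfolding gen_field_def by auto
lemma gen_field_sub: "S \<subseteq> gen_field K T \<Longrightarrow> gen_field K S \<subseteq> gen_field K T"
  by (rule gen_field_min[OF gen_field_sf gen_field_K])
lemma gen_field_eq: "S \<subseteq> gen_field K T \<Longrightarrow> T \<subseteq> gen_field K S \<Longrightarrow> gen_field K S = gen_field K T"
  using gen_field_sub by blast

section \<open>Spans\<close>

definition kspan :: "'a::field set \<Rightarrow> 'a set \<Rightarrow> 'a set" where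
  "kspan K G = {y. \<exists>\<mu>. (\<forall>g\<in>G. \<mu> g \<in> K) \<and> y = (\<Sum>g\<in>G. \<mu> g * g)}"

lemma span_0: "subfield K \<Longrightarrow> 0 \<in> kspan K G"
  unfolding kspan_def by (rule CollectI, rule exI[of _ "\<lambda>_. 0"]) (auto simp: sf_0)

lemma span_add: "subfield K \<Longrightarrow> x \<in> kspan K G \<Longrightarrow> y \<in> kspan K G \<Longrightarrow> x + y \<in> kspan K G"
  unfolding kspan_def
proof (clarify)
  fix \<mu> \<nu> assume K: "subfield K" and m: "\<forall>g\<in>G. \<mu> g \<in> K" and n: "\<forall>g\<in>G. \<nu> g \<in> K"
  show "\<exists>\<rho>. (\<forall>g\<in>G. \<rho> g \<in> K) \<and> (\<Sum>g\<in>G. \<mu> g * g) + (\<Sum>g\<in>G. \<nu> g * g) = (\<Sum>g\<in>G. \<rho> g * g)"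
    by (rule exI[of _ "\<lambda>g. \<mu> g + \<nu> g"]) (auto simp: sf_add[OF K] m n sum.distrib distrib_right)
qed

lemma span_smult: "subfield K \<Longrightarrow> k \<in> K \<Longrightarrow> x \<in> kspan K G \<Longrightarrow> k * x \<in> kspan K G"
  unfolding kspan_def
proof (clarify)
  fix \<mu> assume K: "subfield K" and k: "k \<in> K" and m: "\<forall>g\<in>G. \<mu> g \<in> K"
  show "\<exists>\<rho>. (\<forall>g\<in>G. \<rho> g \<in> K) \<and> k * (\<Sum>g\<in>G. \<mu> g * g) = (\<Sum>g\<in>G. \<rho> g * g)"
    by (rule exI[of _ "\<lambda>g. k * \<mu> g"]) (auto simp: sf_mult[OF K] k m sum_distrib_left mult.assoc)
qed

lemma span_elem: "subfield K \<Longrightarrow> finite G \<Longrightarrow> g \<in> G \<Longrightarrow> g \<in> kspan K G"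
  unfolding kspan_def
proof (rule CollectI, rule exI[of _ "\<lambda>h. if h = g then 1 else 0"], intro conjI)
  assume "subfield K" "finite G" "g \<in> G"
  then show "\<forall>h\<in>G. (if h = g then 1 else 0) \<in> K" by (auto simp: sf_0 sf_1)
  show "g = (\<Sum>h\<in>G. (if h = g then 1 else 0) * h)" using \<open>finite G\<close> \<open>g \<in> G\<close>
  proof -
    have "(\<Sum>h\<in>G. (if h = g then 1 else 0) * h) = (\<Sum>h\<in>G. if h = g then h else 0)"
      by (rule sum.cong) auto
    then show ?thesis using \<open>finite G\<close> \<open>g \<in> G\<close> by simp
  qed
qed

lemma span_sum: "subfield K \<Longrightarrow> (\<And>i. i \<in> I \<Longrightarrow> f i \<in> kspan K G) \<Longrightarrow> sum f I \<in> kspan K G"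
  by (induction I rule: infinite_finite_induct) (auto simp: span_0 span_add)

lemma span_diff: "subfield K \<Longrightarrow> x \<in> kspan K G \<Longrightarrow> y \<in> kspan K G \<Longrightarrow> x - y \<in> kspan K G"
proof -
  assume K: "subfield K" and x: "x \<in> kspan K G" and y: "y \<in> kspan K G"
  have "(-1) * y \<in> kspan K G" by (rule span_smult[OF K _ y]) (simp add: K sf_1 sf_uminus)
  then show ?thesis using span_add[OF K x, of "(-1) * y"] by simp
qed

lemma span_mono: "subfield K \<Longrightarrow> finite H \<Longrightarrow> G \<subseteq> kspan K H \<Longrightarrow> kspan K G \<subseteq> kspan K H"
proof
  fix y assume K: "subfield K" and H: "finite H" and G: "G \<subseteq> kspan K H" and y: "y \<in> kspan K G"
  then obtain \<mu> where m: "\<forall>g\<in>G. \<mu> g \<in> K" and y: "y = (\<Sum>g\<in>G. \<mu> g * g)" unfolding kspan_def by auto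
  show "y \<in> kspan K H" unfolding y
    by (rule span_sum[OF K]) (use G m in \<open>auto intro: span_smult[OF K]\<close>)
qed



lemma lin_dep:
  assumes K: "subfield K" and G: "finite G"
  shows "finite I \<Longrightarrow> card I > card G \<Longrightarrow> (\<forall>i\<in>I. f i \<in> kspan K G) \<Longrightarrow>
    \<exists>lm. (\<forall>i\<in>I. lm i \<in> K) \<and> (\<exists>i\<in>I. lm i \<noteq> 0) \<and> (\<Sum>i\<in>I. lm i * f i) = 0"
  using G
proof (induction G arbitrary: I f rule: finite_induct)
  case empty
  then obtain i0 where i0: "i0 \<in> I" by fastforce
  have f0: "\<forall>i\<in>I. f i = 0" using empty.prems(3) unfolding kspan_def by auto
  have "(\<Sum>i\<in>I. (if i = i0 then 1 else 0) * f i) = 0"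
    by (rule sum.neutral) (use f0 in auto)
  then show ?case
    by (intro exI[of _ "\<lambda>i. if i = i0 then 1 else 0"] conjI) (use i0 K in \<open>auto simp: sf_0 sf_1\<close>)
next
  case (insert g G I f)
  from insert.prems(3) have "\<forall>i\<in>I. \<exists>\<mu>. (\<forall>h\<in>insert g G. \<mu> h \<in> K) \<and> f i = (\<Sum>h\<in>insert g G. \<mu> h * h)"
    unfolding kspan_def by auto
  then have "\<exists>\<mu>. \<forall>i\<in>I. (\<forall>h\<in>insert g G. \<mu> i h \<in> K) \<and> f i = (\<Sum>h\<in>insert g G. \<mu> i h * h)"
    by (rule bchoice)
  then obtain \<mu> where mu': "\<forall>i\<in>I. (\<forall>h\<in>insert g G. \<mu> i h \<in> K) \<and> f i = (\<Sum>h\<in>insert g G. \<mu> i h * h)"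
    by blast
  have mu: "\<And>i h. i \<in> I \<Longrightarrow> h \<in> insert g G \<Longrightarrow> \<mu> i h \<in> K" using mu' by blast
  have fi0: "\<And>i. i \<in> I \<Longrightarrow> f i = (\<Sum>h\<in>insert g G. \<mu> i h * h)" using mu' by blast
  have fi: "f i = \<mu> i g * g + (\<Sum>h\<in>G. \<mu> i h * h)" if "i \<in> I" for i
    using fi0[OF that] insert.hyps by simp
  show ?case
  proof (cases "\<forall>i\<in>I. \<mu> i g = 0")
    case True
    have "\<forall>i\<in>I. f i \<in> kspan K G"
    proof
      fix i assume i: "i \<in> I"
      show "f i \<in> kspan K G" unfolding kspan_def using i True mu fi by auto
    qed
    moreover have "card I > card G" using insert by simp
    ultimately show ?thesis using insert.IH insert.prems(1) by blast
  next
    case False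
    then obtain i0 where i0: "i0 \<in> I" "\<mu> i0 g \<noteq> 0" by blast
    define I' where "I' = I - {i0}"
    define f' where "f' i = f i - (\<mu> i g / \<mu> i0 g) * f i0" for i
    have cI': "card I' > card G" using insert i0 unfolding I'_def by (simp add: card_Diff_singleton)
    have "\<forall>i\<in>I'. f' i \<in> kspan K G"
    proof
      fix i assume i: "i \<in> I'"
      then have iI: "i \<in> I" unfolding I'_def by simp
      define r where "r = \<mu> i g / \<mu> i0 g"
      have "f' i = (\<mu> i g * g - r * (\<mu> i0 g * g)) + ((\<Sum>h\<in>G. \<mu> i h * h) - r * (\<Sum>h\<in>G. \<mu> i0 h * h))"
        unfolding f'_def fi[OF iI] fi[OF i0(1)] r_def by (simp add: algebra_simps)
      also have "\<mu> i g * g - r * (\<mu> i0 g * g) = 0" unfolding r_def using i0(2) by simp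
      also have "r * (\<Sum>h\<in>G. \<mu> i0 h * h) = (\<Sum>h\<in>G. (r * \<mu> i0 h) * h)"
        by (simp add: sum_distrib_left mult.assoc)
      also have "(\<Sum>h\<in>G. \<mu> i h * h) - (\<Sum>h\<in>G. (r * \<mu> i0 h) * h) = (\<Sum>h\<in>G. (\<mu> i h - r * \<mu> i0 h) * h)"
        by (simp add: sum_subtractf left_diff_distrib)
      finally have e: "f' i = (\<Sum>h\<in>G. (\<mu> i h - r * \<mu> i0 h) * h)" by simp
      have "\<forall>h\<in>G. \<mu> i h - r * \<mu> i0 h \<in> K"
        unfolding r_def using mu iI i0 K by (auto intro!: sf_diff sf_mult sf_divide)
      then show "f' i \<in> kspan K G" unfolding kspan_def using e by auto
    qed
    then obtain lm where l1: "\<forall>i\<in>I'. lm i \<in> K" and l2: "\<exists>i\<in>I'. lm i \<noteq> 0"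
      and l3: "(\<Sum>i\<in>I'. lm i * f' i) = 0"
      using insert.IH[of I' f'] cI' insert.prems(1) unfolding I'_def by auto
    define lm' where "lm' i = (if i = i0 then - (\<Sum>j\<in>I'. lm j * (\<mu> j g / \<mu> i0 g)) else lm i)" for i
    have fin: "finite I'" using insert.prems(1) unfolding I'_def by simp
    have "(\<Sum>i\<in>I. lm' i * f i) = lm' i0 * f i0 + (\<Sum>i\<in>I'. lm' i * f i)"
      unfolding I'_def using insert.prems(1) i0(1) by (simp add: sum.remove)
    also have "(\<Sum>i\<in>I'. lm' i * f i) = (\<Sum>i\<in>I'. lm i * f i)"
      unfolding lm'_def I'_def by (rule sum.cong) auto
    also have "(\<Sum>i\<in>I'. lm i * f' i) = (\<Sum>i\<in>I'. lm i * f i) - (\<Sum>i\<in>I'. lm i * (\<mu> i g / \<mu> i0 g)) * f i0"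
      unfolding f'_def by (simp add: right_diff_distrib sum_subtractf sum_distrib_right mult.assoc)
    then have "lm' i0 * f i0 + (\<Sum>i\<in>I'. lm i * f i) = (\<Sum>i\<in>I'. lm i * f' i)"
      unfolding lm'_def by simp
    finally have s: "(\<Sum>i\<in>I. lm' i * f i) = 0" using l3 by simp
    have "\<forall>i\<in>I. lm' i \<in> K"
      unfolding lm'_def using l1 mu i0 K
      by (auto intro!: sf_uminus sf_sum sf_mult sf_divide simp: I'_def)
    moreover have "\<exists>i\<in>I. lm' i \<noteq> 0" using l2 unfolding lm'_def I'_def by auto
    ultimately show ?thesis using s by blast
  qed
qed



definition mon :: "'a::field \<Rightarrow> 'a \<Rightarrow> nat \<times> nat \<Rightarrow> 'a" where
  "mon w z ij = w ^ fst ij * z ^ snd ij"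

definition Dg :: "nat \<Rightarrow> (nat \<times> nat) set" where
  "Dg n = {ij. fst ij + snd ij \<le> n}"

definition RR :: "'a::field set \<Rightarrow> 'a \<Rightarrow> 'a \<Rightarrow> nat \<Rightarrow> 'a set" where
  "RR K w z n = kspan K (mon w z ` Dg n)"

lemma finite_Dg: "finite (Dg n)"
proof -
  have "Dg n \<subseteq> {..n} \<times> {..n}" unfolding Dg_def by auto
  then show ?thesis by (rule finite_subset) auto
qed

lemma finite_monDg: "finite (mon w z ` Dg n)" using finite_Dg by simp

lemma mon_in_RR: assumes K: "subfield K" and ij: "i + j \<le> n" shows "w ^ i * z ^ j \<in> RR K w z n"
  unfolding RR_def
proof (rule span_elem[OF K finite_monDg])
  show "w ^ i * z ^ j \<in> mon w z ` Dg n" using ij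
    unfolding mon_def Dg_def image_iff by (intro bexI[of _ "(i,j)"]) auto
qed

lemma RR_mono: assumes K: "subfield K" and mn: "m \<le> n" shows "RR K w z m \<subseteq> RR K w z n"
  unfolding RR_def
proof (rule span_mono[OF K finite_monDg])
  show "mon w z ` Dg m \<subseteq> kspan K (mon w z ` Dg n)"
    using mon_in_RR[OF K, of _ _ n w z] mn unfolding RR_def mon_def Dg_def by auto
qed

lemma RR_add: "subfield K \<Longrightarrow> x \<in> RR K w z n \<Longrightarrow> y \<in> RR K w z n \<Longrightarrow> x + y \<in> RR K w z n"
  unfolding RR_def by (rule span_add)
lemma RR_diff: "subfield K \<Longrightarrow> x \<in> RR K w z n \<Longrightarrow> y \<in> RR K w z n \<Longrightarrow> x - y \<in> RR K w z n"
  unfolding RR_def by (rule span_diff)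
lemma RR_smult: "subfield K \<Longrightarrow> k \<in> K \<Longrightarrow> x \<in> RR K w z n \<Longrightarrow> k * x \<in> RR K w z n"
  unfolding RR_def by (rule span_smult)
lemma RR_K: assumes K: "subfield K" and k: "k \<in> K" shows "k \<in> RR K w z n"
proof -
  have "1 \<in> RR K w z n" using mon_in_RR[OF K, of 0 0 n w z] by simp
  from RR_smult[OF K k this] show ?thesis by simp
qed
lemma RR_w: "subfield K \<Longrightarrow> w \<in> RR K w z 1"
  using mon_in_RR[of K 1 0 1 w z] by simp
lemma RR_z: "subfield K \<Longrightarrow> z \<in> RR K w z 1"
  using mon_in_RR[of K 0 1 1 w z] by simp

lemma RR_mult: assumes K: "subfield K" and x: "x \<in> RR K w z m" and y: "y \<in> RR K w z n"
  shows "x * y \<in> RR K w z (m + n)"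
proof -
  obtain \<mu> where m: "\<forall>g\<in>mon w z ` Dg m. \<mu> g \<in> K" and xe: "x = (\<Sum>g\<in>mon w z ` Dg m. \<mu> g * g)"
    using x unfolding RR_def kspan_def by auto
  obtain \<nu> where n: "\<forall>g\<in>mon w z ` Dg n. \<nu> g \<in> K" and ye: "y = (\<Sum>g\<in>mon w z ` Dg n. \<nu> g * g)"
    using y unfolding RR_def kspan_def by auto
  have "x * y = (\<Sum>g\<in>mon w z ` Dg m. \<Sum>h\<in>mon w z ` Dg n. (\<mu> g * \<nu> h) * (g * h))"
    unfolding xe ye sum_product by (simp add: mult_ac)
  also have "\<dots> \<in> RR K w z (m + n)"
  proof -
    have "(\<mu> g * \<nu> h) * (g * h) \<in> RR K w z (m + n)"
      if g: "g \<in> mon w z ` Dg m" and h: "h \<in> mon w z ` Dg n" for g h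
    proof (rule RR_smult[OF K])
    show "\<mu> g * \<nu> h \<in> K" using g h m n K sf_mult[of K "\<mu> g" "\<nu> h"] by blast
    from g obtain i j where "g = w^i * z^j" "i + j \<le> m" unfolding mon_def Dg_def by auto
    moreover from h obtain k l where "h = w^k * z^l" "k + l \<le> n" unfolding mon_def Dg_def by auto
    ultimately have "g * h = w^(i+k) * z^(j+l)" "(i+k) + (j+l) \<le> m + n"
      by (auto simp: power_add mult_ac)
    then show "g * h \<in> RR K w z (m + n)" using mon_in_RR[OF K] by simp
    qed
    then show ?thesis unfolding RR_def by (intro span_sum[OF K]) auto
  qed
  finally show ?thesis .
qed

lemma RR_power: assumes K: "subfield K" and x: "x \<in> RR K w z e"
  shows "x ^ k \<in> RR K w z (k * e)"
proof (induction k)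
  case 0 then show ?case using RR_K[OF K sf_1[OF K]] by simp
next
  case (Suc k)
  then show ?case using RR_mult[OF K x Suc] by (simp add: add.commute)
qed

definition FR :: "'a::field set \<Rightarrow> 'a \<Rightarrow> 'a \<Rightarrow> 'a set" where
  "FR K w z = {y. \<exists>e p q. p \<in> RR K w z e \<and> q \<in> RR K w z e \<and> q \<noteq> 0 \<and> y = p / q}"

lemma FR_subfield: assumes K: "subfield K" shows "subfield (FR K w z)"
proof -
  have lift: "p \<in> RR K w z (max e1 e2)" if "p \<in> RR K w z e1" for p e1 e2
    using RR_mono[OF K, of e1 "max e1 e2"] that by auto
  have lift2: "p \<in> RR K w z (max e1 e2)" if "p \<in> RR K w z e2" for p e1 e2
    using RR_mono[OF K, of e2 "max e1 e2"] that by auto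
  have one: "(1::'a) \<in> RR K w z 0" using RR_K[OF K sf_1[OF K]] .
  have zero: "(0::'a) \<in> RR K w z 0" using RR_K[OF K sf_0[OF K]] .
  have "0 \<in> FR K w z" unfolding FR_def using one zero by (intro CollectI exI[of _ 0] exI[of _ 0] exI[of _ 1]) auto
  moreover have "1 \<in> FR K w z" unfolding FR_def using one by (intro CollectI exI[of _ 0] exI[of _ 1] exI[of _ 1]) auto
  moreover have "x + y \<in> FR K w z \<and> x - y \<in> FR K w z \<and> x * y \<in> FR K w z"
    if x: "x \<in> FR K w z" and y: "y \<in> FR K w z" for x y
  proof -
    obtain e1 p1 q1 where a: "p1 \<in> RR K w z e1" "q1 \<in> RR K w z e1" "q1 \<noteq> 0" "x = p1 / q1"
      using x unfolding FR_def by auto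
    obtain e2 p2 q2 where b: "p2 \<in> RR K w z e2" "q2 \<in> RR K w z e2" "q2 \<noteq> 0" "y = p2 / q2"
      using y unfolding FR_def by auto
    define e where "e = max e1 e2"
    have a': "p1 \<in> RR K w z e" "q1 \<in> RR K w z e" using a lift unfolding e_def by auto
    have b': "p2 \<in> RR K w z e" "q2 \<in> RR K w z e" using b lift2 unfolding e_def by auto
    have q: "q1 * q2 \<in> RR K w z (e + e)" "q1 * q2 \<noteq> 0" using RR_mult[OF K a'(2) b'(2)] a b by auto
    have "p1 * q2 + p2 * q1 \<in> RR K w z (e + e)"
      using RR_mult[OF K a'(1) b'(2)] RR_mult[OF K b'(1) a'(2)] RR_add[OF K] by auto
    moreover have "x + y = (p1 * q2 + p2 * q1) / (q1 * q2)" using a b by (simp add: field_simps)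
    ultimately have 1: "x + y \<in> FR K w z" unfolding FR_def using q by blast
    have "p1 * q2 - p2 * q1 \<in> RR K w z (e + e)"
      using RR_mult[OF K a'(1) b'(2)] RR_mult[OF K b'(1) a'(2)] RR_diff[OF K] by auto
    moreover have "x - y = (p1 * q2 - p2 * q1) / (q1 * q2)" using a b by (simp add: field_simps)
    ultimately have 2: "x - y \<in> FR K w z" unfolding FR_def using q by blast
    have "p1 * p2 \<in> RR K w z (e + e)" using RR_mult[OF K a'(1) b'(1)] .
    moreover have "x * y = (p1 * p2) / (q1 * q2)" using a b by simp
    ultimately have 3: "x * y \<in> FR K w z" unfolding FR_def using q by blast
    show ?thesis using 1 2 3 by blast
  qed
  moreover have "inverse x \<in> FR K w z" if x: "x \<in> FR K w z" for x
  proof -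
    obtain e1 p1 q1 where a: "p1 \<in> RR K w z e1" "q1 \<in> RR K w z e1" "q1 \<noteq> 0" "x = p1 / q1"
      using x unfolding FR_def by auto
    show ?thesis
    proof (cases "p1 = 0")
      case True then show ?thesis using a \<open>0 \<in> FR K w z\<close> by simp
    next
      case False
      then have "inverse x = q1 / p1" using a by simp
      then show ?thesis unfolding FR_def using a False by blast
    qed
  qed
  ultimately show ?thesis unfolding subfield_def by blast
qed

lemma gen_field_FR: assumes K: "subfield K" shows "gen_field K {w, z} \<subseteq> FR K w z"
proof (rule gen_field_min[OF FR_subfield[OF K]])
  have one: "(1::'a) \<in> RR K w z 1" using RR_K[OF K sf_1[OF K]] .
  show "K \<subseteq> FR K w z"
  proof
    fix k assume "k \<in> K"
    then have "k \<in> RR K w z 1" using RR_K[OF K] by blast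
    then show "k \<in> FR K w z" unfolding FR_def using one by (intro CollectI exI[of _ 1] exI[of _ k] exI[of _ 1]) auto
  qed
  have "w \<in> FR K w z" unfolding FR_def using one RR_w[OF K]
    by (intro CollectI exI[of _ 1] exI[of _ w] exI[of _ 1]) auto
  moreover have "z \<in> FR K w z" unfolding FR_def using one RR_z[OF K]
    by (intro CollectI exI[of _ 1] exI[of _ z] exI[of _ 1]) auto
  ultimately show "{w, z} \<subseteq> FR K w z" by auto
qed



lemma mono_eval2: "mono_eval \<alpha> [x, y] = x ^ \<alpha> 0 * y ^ \<alpha> 1"
  by (simp add: mono_eval_def numeral_2_eq_2 lessThan_Suc)

lemma count_ineq: "M = T + 1 \<Longrightarrow> T = 2 * C * (e + 1) \<Longrightarrow> C * (2 * M * e + 1) < (M + 1) * (M + 1::nat)"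
proof -
  assume M: "M = T + 1" and T: "T = 2 * C * (e + 1)"
  have "C * (2 * M * e + 1) \<le> C * (2 * M * e + 2 * M)" by (intro mult_le_mono2) (use M in simp)
  also have "\<dots> = M * T" using T by (simp add: algebra_simps)
  also have "\<dots> < (M + 1) * (M + 1)" using M by (intro mult_le_less_imp_less) auto
  finally show ?thesis .
qed

definition gless :: "nat \<times> nat \<Rightarrow> nat \<times> nat \<Rightarrow> bool" where
  "gless b a \<longleftrightarrow> fst b + snd b < fst a + snd a \<or> (fst b + snd b = fst a + snd a \<and> fst b < fst a)"

lemma leading_exists:
  assumes "finite A" "A \<noteq> {}"
  shows "\<exists>a\<in>A. \<forall>b\<in>A. b \<noteq> a \<longrightarrow> gless b a"
proof -
  define D where "D = Max ((\<lambda>b. fst b + snd b) ` A)"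
  define A2 where "A2 = {b\<in>A. fst b + snd b = D}"
  have "D \<in> (\<lambda>b. fst b + snd b) ` A" unfolding D_def using assms by (intro Max_in) auto
  then obtain b0 where "b0 \<in> A" "fst b0 + snd b0 = D" by auto
  then have "b0 \<in> A2" unfolding A2_def by simp
  then have A2ne: "A2 \<noteq> {}" by auto
  have A2fin: "finite A2" using assms unfolding A2_def by auto
  define i0 where "i0 = Max (fst ` A2)"
  have "i0 \<in> fst ` A2" unfolding i0_def using A2ne A2fin by (intro Max_in) auto
  then obtain a where a: "a \<in> A2" "fst a = i0" by auto
  have "\<forall>b\<in>A. b \<noteq> a \<longrightarrow> gless b a"
  proof (intro ballI impI)
    fix b assume b: "b \<in> A" "b \<noteq> a"
    have "fst b + snd b \<le> D" unfolding D_def using assms b by (intro Max_ge) auto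
    moreover have aD: "fst a + snd a = D" using a unfolding A2_def by auto
    moreover have "fst b < fst a" if "fst b + snd b = D"
    proof -
      have "b \<in> A2" using b that unfolding A2_def by auto
      then have "fst b \<le> i0" unfolding i0_def using A2fin by (intro Max_ge) auto
      moreover have "fst b \<noteq> fst a" using that aD b(2) by (metis add_left_cancel prod.expand)
      ultimately show ?thesis using a by simp
    qed
    ultimately show "gless b a" unfolding gless_def by linarith
  qed
  then show ?thesis using a unfolding A2_def by auto
qed

definition Std :: "'a::field \<Rightarrow> 'a \<Rightarrow> nat \<Rightarrow> nat \<times> nat \<Rightarrow> 'a set" where
  "Std w z n a = mon w z ` {ij \<in> Dg n. \<not> (fst a \<le> fst ij \<and> snd a \<le> snd ij)}"

lemma finite_Std: "finite (Std w z n a)"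
  unfolding Std_def using finite_Dg by auto

lemma card_Std: "card (Std w z n a) \<le> (fst a + snd a) * (n + 1)"
proof -
  have "{ij \<in> Dg n. \<not> (fst a \<le> fst ij \<and> snd a \<le> snd ij)} \<subseteq> ({..<fst a} \<times> {..n}) \<union> ({..n} \<times> {..<snd a})"
    unfolding Dg_def by auto
  then have "card {ij \<in> Dg n. \<not> (fst a \<le> fst ij \<and> snd a \<le> snd ij)} \<le> card (({..<fst a} \<times> {..n}) \<union> ({..n} \<times> {..<snd a}))"
    by (intro card_mono) auto
  also have "\<dots> \<le> card ({..<fst a} \<times> {..n}) + card ({..n} \<times> {..<snd a})" by (rule card_Un_le)
  also have "\<dots> = (fst a + snd a) * (n + 1)" by (simp add: card_cartesian_product algebra_simps)
  finally have c1: "card {ij \<in> Dg n. \<not> (fst a \<le> fst ij \<and> snd a \<le> snd ij)} \<le> (fst a + snd a) * (n + 1)" .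
  have "card (Std w z n a) \<le> card {ij \<in> Dg n. \<not> (fst a \<le> fst ij \<and> snd a \<le> snd ij)}"
    unfolding Std_def by (rule card_image_le) (use finite_Dg in auto)
  then show ?thesis using c1 by linarith
qed

lemma reduction:
  assumes K: "subfield K" and A: "finite A" and cK: "\<forall>b\<in>A. c b \<in> K"
    and nz: "\<forall>b\<in>A. c b \<noteq> 0" and aA: "a \<in> A" and lead: "\<forall>b\<in>A. b \<noteq> a \<longrightarrow> gless b a"
    and rel: "(\<Sum>b\<in>A. c b * mon w z b) = 0"
  shows "i + j \<le> n \<Longrightarrow> w ^ i * z ^ j \<in> kspan K (Std w z n a)"
proof -
  let ?S = "kspan K (Std w z n a)"
  have "\<forall>i j. i + j = d \<longrightarrow> d \<le> n \<longrightarrow> w ^ i * z ^ j \<in> ?S" for d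
  proof (induction d rule: less_induct)
    case (less d)
    note IHd = less.IH
    have "\<forall>j. i + j = d \<longrightarrow> d \<le> n \<longrightarrow> w ^ i * z ^ j \<in> ?S" for i
    proof (induction i rule: less_induct)
      case (less i)
      show ?case
      proof (intro allI impI)
        fix j assume ij: "i + j = d" and dn: "d \<le> n"
        show "w ^ i * z ^ j \<in> ?S"
        proof (cases "fst a \<le> i \<and> snd a \<le> j")
          case False
          have "w ^ i * z ^ j \<in> Std w z n a" unfolding Std_def mon_def Dg_def image_iff
            using False ij dn by (intro bexI[of _ "(i,j)"]) auto
          then show ?thesis by (rule span_elem[OF K finite_Std])
        next
          case True
          define k where "k = i - fst a"
          define l where "l = j - snd a"
          define sh where "sh b = (fst b + k, snd b + l)" for b :: "nat \<times> nat"
          have shmon: "mon w z (sh b) = w ^ k * z ^ l * mon w z b" for b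
            unfolding sh_def mon_def by (simp add: power_add mult_ac)
          have sha: "sh a = (i, j)" unfolding sh_def k_def l_def using True by auto
          have "(\<Sum>b\<in>A. c b * mon w z (sh b)) = w ^ k * z ^ l * (\<Sum>b\<in>A. c b * mon w z b)"
            unfolding shmon sum_distrib_left by (simp add: mult_ac)
          then have "(\<Sum>b\<in>A. c b * mon w z (sh b)) = 0" using rel by simp
          then have "c a * mon w z (sh a) + (\<Sum>b\<in>A - {a}. c b * mon w z (sh b)) = 0"
            using A aA by (simp add: sum.remove)
          then have s1: "(\<Sum>b\<in>A - {a}. c b * mon w z (sh b)) = - (c a * (w ^ i * z ^ j))"
            unfolding sha mon_def by (simp add: eq_neg_iff_add_eq_0 add.commute)
          have "(\<Sum>b\<in>A - {a}. (- (c b / c a)) * mon w z (sh b)) = (- (1 / c a)) * (\<Sum>b\<in>A - {a}. c b * mon w z (sh b))"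
            unfolding sum_distrib_left by (rule sum.cong) auto
          also have "\<dots> = w ^ i * z ^ j" unfolding s1 using nz aA by simp
          finally have eq: "w ^ i * z ^ j = (\<Sum>b\<in>A - {a}. (- (c b / c a)) * mon w z (sh b))" by simp
          show ?thesis unfolding eq
          proof (intro span_sum[OF K] span_smult[OF K])
            fix b assume b: "b \<in> A - {a}"
            show "- (c b / c a) \<in> K" using b aA cK K by (auto intro!: sf_uminus sf_divide)
            have g: "gless b a" using lead b by auto
            show "mon w z (sh b) \<in> ?S"
            proof (cases "fst (sh b) + snd (sh b) < d")
              case True
              then show ?thesis using IHd[of "fst (sh b) + snd (sh b)"] dn
                unfolding mon_def by simp
            next
              case False
              then have "fst (sh b) + snd (sh b) = d \<and> fst (sh b) < i"
                using g ij True unfolding gless_def sh_def k_def l_def by auto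
              then show ?thesis using less.IH[of "fst (sh b)"] dn
                unfolding mon_def by simp
            qed
          qed
        qed
      qed
    qed
    then show ?case by blast
  qed
  then show "i + j \<le> n \<Longrightarrow> w ^ i * z ^ j \<in> ?S" by blast
qed



lemma pow_frac: "(q::'a::field) \<noteq> 0 \<Longrightarrow> i \<le> M \<Longrightarrow> p ^ i * q ^ (M - i) = q ^ M * (p / q) ^ i"
proof -
  assume q: "q \<noteq> 0" and iM: "i \<le> M"
  have "q ^ M = q ^ i * q ^ (M - i)" using iM by (simp add: power_add[symmetric])
  then show ?thesis using q by (simp add: power_divide field_simps)
qed

definition vec2 :: "nat \<times> nat \<Rightarrow> nat \<Rightarrow> nat" where
  "vec2 ij = (\<lambda>k. if k = 0 then fst ij else if k = 1 then snd ij else 0)"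

lemma vec2_inj: "inj vec2"
proof (rule injI)
  fix x y assume "vec2 x = vec2 y"
  then have "vec2 x 0 = vec2 y 0" "vec2 x 1 = vec2 y 1" by auto
  then show "x = y" unfolding vec2_def by (simp add: prod_eq_iff)
qed

lemma not_indep_from_rel:
  assumes I: "finite I" and lK: "\<forall>ij\<in>I. lm ij \<in> K" and lnz: "\<exists>ij\<in>I. lm ij \<noteq> 0"
    and rel: "(\<Sum>ij\<in>I. lm ij * (x1 ^ fst ij * x2 ^ snd ij)) = 0"
  shows "\<not> alg_indep K [x1, x2]"
proof
  assume ind: "alg_indep K [x1, x2]"
  define c where "c \<alpha> = lm (\<alpha> 0, \<alpha> 1)" for \<alpha> :: "nat \<Rightarrow> nat"
  have cv: "c (vec2 ij) = lm ij" for ij unfolding c_def vec2_def by simp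
  have "(\<Sum>\<alpha>\<in>vec2 ` I. c \<alpha> * mono_eval \<alpha> [x1, x2]) = (\<Sum>ij\<in>I. c (vec2 ij) * mono_eval (vec2 ij) [x1, x2])"
    using sum.reindex[OF inj_on_subset[OF vec2_inj subset_UNIV], of "\<lambda>\<alpha>. c \<alpha> * mono_eval \<alpha> [x1, x2]" I]
    by (simp add: comp_def)
  also have "\<dots> = (\<Sum>ij\<in>I. lm ij * (x1 ^ fst ij * x2 ^ snd ij))"
    unfolding cv mono_eval2 by (simp add: vec2_def)
  finally have s: "(\<Sum>\<alpha>\<in>vec2 ` I. c \<alpha> * mono_eval \<alpha> [x1, x2]) = 0" using rel by simp
  have "\<forall>\<alpha>\<in>vec2 ` I. c \<alpha> = 0"
    using ind[unfolded alg_indep_def, rule_format, of "vec2 ` I" c] s I lK cv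
    by (auto simp: vec2_def)
  then show False using lnz cv by auto
qed

lemma KL1:
  assumes K: "subfield K" and A: "finite A" and cK: "\<forall>b\<in>A. c b \<in> K" and nz: "\<exists>b\<in>A. c b \<noteq> 0"
    and rel: "(\<Sum>b\<in>A. c b * (w ^ fst b * z ^ snd b)) = 0"
    and x1: "x1 \<in> gen_field K {w, z}" and x2: "x2 \<in> gen_field K {w, z}"
  shows "\<not> alg_indep K [x1, x2]"
proof -
  define A' where "A' = {b\<in>A. c b \<noteq> 0}"
  have A'fin: "finite A'" using A unfolding A'_def by simp
  have A'ne: "A' \<noteq> {}" using nz unfolding A'_def by auto
  have rel': "(\<Sum>b\<in>A'. c b * mon w z b) = 0"
  proof -
    have "(\<Sum>b\<in>A'. c b * mon w z b) = (\<Sum>b\<in>A. c b * mon w z b)"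
      by (rule sum.mono_neutral_left) (use A in \<open>auto simp: A'_def\<close>)
    then show ?thesis using rel unfolding mon_def by simp
  qed
  obtain a where aA: "a \<in> A'" and lead: "\<forall>b\<in>A'. b \<noteq> a \<longrightarrow> gless b a"
    using leading_exists[OF A'fin A'ne] by blast
  have red: "i + j \<le> n \<Longrightarrow> w ^ i * z ^ j \<in> kspan K (Std w z n a)" for i j n
    by (rule reduction[OF K A'fin _ _ aA lead rel']) (use cK in \<open>auto simp: A'_def\<close>)
  have RRsub: "RR K w z n \<subseteq> kspan K (Std w z n a)" for n
    unfolding RR_def
    by (rule span_mono[OF K finite_Std]) (auto simp: mon_def Dg_def intro!: red)
  have x1F: "x1 \<in> FR K w z" and x2F: "x2 \<in> FR K w z" using gen_field_FR[OF K] x1 x2 by auto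
  obtain e1 p1 q1 where a1: "p1 \<in> RR K w z e1" "q1 \<in> RR K w z e1" "q1 \<noteq> 0" "x1 = p1 / q1"
    using x1F unfolding FR_def by auto
  obtain e2 p2 q2 where a2: "p2 \<in> RR K w z e2" "q2 \<in> RR K w z e2" "q2 \<noteq> 0" "x2 = p2 / q2"
    using x2F unfolding FR_def by auto
  define e where "e = max e1 e2"
  have p1: "p1 \<in> RR K w z e" "q1 \<in> RR K w z e" using a1 RR_mono[OF K, of e1 e] unfolding e_def by auto
  have p2: "p2 \<in> RR K w z e" "q2 \<in> RR K w z e" using a2 RR_mono[OF K, of e2 e] unfolding e_def by auto
  define C where "C = fst a + snd a"
  define T where "T = 2 * C * (e + 1)"
  define M where "M = T + 1"
  define I where "I = {..M} \<times> {..M}"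
  define f where "f ij = p1 ^ fst ij * q1 ^ (M - fst ij) * p2 ^ snd ij * q2 ^ (M - snd ij)" for ij
  have Ifin: "finite I" unfolding I_def by simp
  have cardI: "card I = (M + 1) * (M + 1)" unfolding I_def by (simp add: card_cartesian_product)
  have fin: "f ij \<in> kspan K (Std w z (2 * M * e) a)" if ij: "ij \<in> I" for ij
  proof -
    obtain i j where ij': "ij = (i, j)" "i \<le> M" "j \<le> M" using ij unfolding I_def by auto
    have "f ij \<in> RR K w z (i * e + (M - i) * e + j * e + (M - j) * e)"
      unfolding f_def ij'(1) fst_conv snd_conv
      by (intro RR_mult[OF K] RR_power[OF K] p1 p2)
    also have "i * e + (M - i) * e + j * e + (M - j) * e = 2 * M * e"
      using ij' by (simp add: add_mult_distrib[symmetric])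
    finally show ?thesis using RRsub by blast
  qed
  have "card (Std w z (2 * M * e) a) < card I"
    using card_Std[of w z "2 * M * e" a] count_ineq[OF M_def T_def] cardI unfolding C_def by linarith
  then obtain lm where l1: "\<forall>ij\<in>I. lm ij \<in> K" and l2: "\<exists>ij\<in>I. lm ij \<noteq> 0"
    and l3: "(\<Sum>ij\<in>I. lm ij * f ij) = 0"
    using lin_dep[OF K finite_Std Ifin, where f=f] fin by blast
  have fe: "f ij = (q1 * q2) ^ M * (x1 ^ fst ij * x2 ^ snd ij)" if "ij \<in> I" for ij
  proof -
    have "fst ij \<le> M" "snd ij \<le> M" using that unfolding I_def by auto
    then have "p1 ^ fst ij * q1 ^ (M - fst ij) = q1 ^ M * x1 ^ fst ij"
      "p2 ^ snd ij * q2 ^ (M - snd ij) = q2 ^ M * x2 ^ snd ij"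
      using pow_frac a1 a2 by auto
    then show ?thesis unfolding f_def power_mult_distrib
      by (metis (no_types, lifting) mult.assoc mult.left_commute)
  qed
  have "(q1 * q2) ^ M * (\<Sum>ij\<in>I. lm ij * (x1 ^ fst ij * x2 ^ snd ij)) = (\<Sum>ij\<in>I. lm ij * f ij)"
    unfolding sum_distrib_left by (rule sum.cong) (auto simp: fe mult_ac)
  then have "(\<Sum>ij\<in>I. lm ij * (x1 ^ fst ij * x2 ^ snd ij)) = 0" using l3 a1 a2 by simp
  then show ?thesis using not_indep_from_rel[OF Ifin l1 l2] by blast
qed



lemma final_indep:
  assumes K: "subfield K" and ind: "alg_indep K [x1, x2]"
    and x1: "x1 \<in> gen_field K {u, v}" and x2: "x2 \<in> gen_field K {u, v}"
  shows "alg_indep K [u, v]"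
proof (rule ccontr)
  assume "\<not> alg_indep K [u, v]"
  then obtain A c where A: "finite A" and Az: "\<forall>\<alpha>\<in>A. \<forall>i\<ge>2. \<alpha> i = 0" and cK: "\<forall>\<alpha>\<in>A. c \<alpha> \<in> K"
    and s: "(\<Sum>\<alpha>\<in>A. c \<alpha> * mono_eval \<alpha> [u, v]) = 0" and nz: "\<exists>\<alpha>\<in>A. c \<alpha> \<noteq> 0"
    unfolding alg_indep_def by (auto simp: numeral_2_eq_2)
  define pr where "pr \<alpha> = (\<alpha> 0, \<alpha> (1::nat))" for \<alpha> :: "nat \<Rightarrow> nat"
  have vp: "vec2 (pr \<alpha>) = \<alpha>" if "\<alpha> \<in> A" for \<alpha>
  proof
    fix k show "vec2 (pr \<alpha>) k = \<alpha> k" using Az that unfolding vec2_def pr_def by auto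
  qed
  have inj: "inj_on pr A" by (metis inj_onI vp)
  define c2 where "c2 ij = c (vec2 ij)" for ij
  have "(\<Sum>ij\<in>pr ` A. c2 ij * (u ^ fst ij * v ^ snd ij)) = (\<Sum>\<alpha>\<in>A. c2 (pr \<alpha>) * (u ^ fst (pr \<alpha>) * v ^ snd (pr \<alpha>)))"
    using sum.reindex[OF inj, of "\<lambda>ij. c2 ij * (u ^ fst ij * v ^ snd ij)"] by (simp add: comp_def)
  also have "\<dots> = (\<Sum>\<alpha>\<in>A. c \<alpha> * mono_eval \<alpha> [u, v])"
  proof (rule sum.cong)
    fix \<alpha> assume "\<alpha> \<in> A"
    then show "c2 (pr \<alpha>) * (u ^ fst (pr \<alpha>) * v ^ snd (pr \<alpha>)) = c \<alpha> * mono_eval \<alpha> [u, v]"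
      unfolding c2_def vp[OF \<open>\<alpha> \<in> A\<close>] mono_eval2 by (simp add: pr_def)
  qed simp
  finally have rel: "(\<Sum>ij\<in>pr ` A. c2 ij * (u ^ fst ij * v ^ snd ij)) = 0" using s by simp
  have "\<not> alg_indep K [x1, x2]"
  proof (rule KL1[OF K _ _ _ rel x1 x2])
    show "finite (pr ` A)" using A by simp
    show "\<forall>b\<in>pr ` A. c2 b \<in> K" using cK vp c2_def by auto
    show "\<exists>b\<in>pr ` A. c2 b \<noteq> 0" using nz vp c2_def by (metis image_eqI)
  qed
  then show False using ind by simp
qed

lemma contra_rel:
  assumes K: "subfield K" and ind: "alg_indep K [x1, x2]"
    and x1: "x1 \<in> gen_field K S" and x2: "x2 \<in> gen_field K S" and S: "S \<subseteq> gen_field K {w, z}"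
    and A: "finite A" and cK: "\<forall>b\<in>A. c b \<in> K" and nz: "\<exists>b\<in>A. c b \<noteq> 0"
    and rel: "(\<Sum>b\<in>A. c b * (w ^ fst b * z ^ snd b)) = 0"
  shows False
proof -
  have "x1 \<in> gen_field K {w, z}" "x2 \<in> gen_field K {w, z}" using gen_field_sub[OF S] x1 x2 by auto
  then show False using KL1[OF K A cK nz rel] ind by blast
qed

lemma contra_quad:
  assumes K: "subfield K" and ind: "alg_indep K [x1, x2]"
    and x1: "x1 \<in> gen_field K S" and x2: "x2 \<in> gen_field K S" and S: "S \<subseteq> gen_field K {w, z}"
    and cK: "c20 \<in> K" "c11 \<in> K" "c10 \<in> K" "c02 \<in> K" "c01 \<in> K" "c00 \<in> K"
    and nz: "c20 \<noteq> 0 \<or> c11 \<noteq> 0 \<or> c10 \<noteq> 0 \<or> c02 \<noteq> 0 \<or> c01 \<noteq> 0"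
    and rel: "c20 * w ^ 2 + c11 * w * z + c10 * w + c02 * z ^ 2 + c01 * z + c00 = 0"
  shows False
proof -
  define A :: "(nat \<times> nat) set" where "A = {(2,0), (1,1), (1,0), (0,2), (0,1), (0,0)}"
  define c where "c ij = (if ij = (2,0) then c20 else if ij = (1,1) then c11 else if ij = (1,0) then c10
     else if ij = (0,2) then c02 else if ij = (0,1) then c01 else c00)" for ij :: "nat \<times> nat"
  have "(\<Sum>b\<in>A. c b * (w ^ fst b * z ^ snd b)) = c20 * w ^ 2 + c11 * w * z + c10 * w + c02 * z ^ 2 + c01 * z + c00"
    unfolding A_def c_def by (simp add: algebra_simps)
  then have r: "(\<Sum>b\<in>A. c b * (w ^ fst b * z ^ snd b)) = 0" using rel by simp
  show False
  proof (rule contra_rel[OF K ind x1 x2 S _ _ _ r])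
    show "finite A" unfolding A_def by simp
    show "\<forall>b\<in>A. c b \<in> K" unfolding A_def c_def using cK by auto
    show "\<exists>b\<in>A. c b \<noteq> 0" unfolding A_def c_def using nz by auto
  qed
qed



lemma finite_homog: "finite (homog_monos n d)"
proof -
  have "homog_monos n d \<subseteq> {f. \<forall>x. (x \<in> {..<n} \<longrightarrow> f x \<in> {..d}) \<and> (x \<notin> {..<n} \<longrightarrow> f x = 0)}"
  proof
    fix \<alpha> assume a: "\<alpha> \<in> homog_monos n d"
    then have z: "\<forall>i\<ge>n. \<alpha> i = 0" and s: "sum \<alpha> {..<n} = d" unfolding homog_monos_def by auto
    have le: "\<alpha> i \<le> d" if "i < n" for i
      using member_le_sum[of i "{..<n}" \<alpha>] that s by auto
    show "\<alpha> \<in> {f. \<forall>x. (x \<in> {..<n} \<longrightarrow> f x \<in> {..d}) \<and> (x \<notin> {..<n} \<longrightarrow> f x = 0)}"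
      using le z by auto
  qed
  moreover have "finite {f. \<forall>x. (x \<in> {..<n} \<longrightarrow> f x \<in> {..d::nat}) \<and> (x \<notin> {..<n} \<longrightarrow> f x = 0)}"
    by (rule finite_set_of_finite_funs) auto
  ultimately show ?thesis using finite_subset by blast
qed

lemma C1_app:
  assumes C1: "C1_field K" and d: "1 \<le> d" "d < n" and cK: "\<forall>\<alpha>. c \<alpha> \<in> K"
    and S: "S \<subseteq> homog_monos n d" and c0: "\<forall>\<alpha>. \<alpha> \<notin> S \<longrightarrow> c \<alpha> = 0"
  shows "\<exists>x. (\<forall>i<n. x i \<in> K) \<and> (\<exists>i<n. x i \<noteq> 0) \<and> (\<Sum>\<alpha>\<in>S. c \<alpha> * (\<Prod>i<n. x i ^ \<alpha> i)) = 0"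
proof -
  obtain x where x: "\<forall>i<n. x i \<in> K" "\<exists>i<n. x i \<noteq> 0"
    "(\<Sum>\<alpha>\<in>homog_monos n d. c \<alpha> * (\<Prod>i<n. x i ^ \<alpha> i)) = 0"
    using C1 d cK unfolding C1_field_def by blast
  have "(\<Sum>\<alpha>\<in>S. c \<alpha> * (\<Prod>i<n. x i ^ \<alpha> i)) = (\<Sum>\<alpha>\<in>homog_monos n d. c \<alpha> * (\<Prod>i<n. x i ^ \<alpha> i))"
    by (rule sum.mono_neutral_left[OF finite_homog S]) (use c0 in auto)
  then show ?thesis using x by auto
qed

definition sqv :: "nat \<Rightarrow> nat \<Rightarrow> nat" where "sqv i = (\<lambda>k. if k = i then 2 else 0)"
definition prv :: "nat \<Rightarrow> nat \<Rightarrow> nat \<Rightarrow> nat" where "prv i j = (\<lambda>k. if k = i \<or> k = j then 1 else 0)"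

lemma sqv_homog: "i < n \<Longrightarrow> sqv i \<in> homog_monos n 2"
  unfolding homog_monos_def sqv_def by (auto simp: sum.delta)

lemma prv_homog: "i < n \<Longrightarrow> j < n \<Longrightarrow> i \<noteq> j \<Longrightarrow> prv i j \<in> homog_monos n 2"
proof -
  assume ij: "i < n" "j < n" "i \<noteq> j"
  have "sum (prv i j) {..<n} = sum (prv i j) {i, j}"
    by (rule sum.mono_neutral_right) (use ij in \<open>auto simp: prv_def\<close>)
  then show ?thesis unfolding homog_monos_def using ij by (auto simp: prv_def)
qed

lemma prod3: "(\<Prod>i::nat<3. f i) = f 0 * f 1 * (f 2 :: 'a::comm_monoid_mult)"
  by (simp add: numeral_3_eq_3 numeral_2_eq_2 lessThan_Suc mult_ac)
lemma prod4: "(\<Prod>i::nat<4. f i) = f 0 * f 1 * f 2 * (f 3 :: 'a::comm_monoid_mult)"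
proof -
  have "(4::nat) = Suc 3" by simp
  then show ?thesis by (simp only: lessThan_Suc prod.insert_if finite_lessThan prod3) (simp add: mult_ac)
qed

lemma conic_point:
  assumes K: "subfield K" and C1: "C1_field K" and a: "a \<in> K" and ns: "\<not> (\<exists>y\<in>K. a = y ^ 2)"
    and e: "e \<in> K" "e \<noteq> 0"
  shows "\<exists>p\<in>K. \<exists>q\<in>K. p ^ 2 - a * q ^ 2 = e"
proof -
  define c where "c \<alpha> = (if \<alpha> = sqv 0 then 1 else if \<alpha> = sqv 1 then - a else if \<alpha> = sqv 2 then - e else 0)" for \<alpha>
  have d: "sqv 0 \<noteq> sqv 1" "sqv 0 \<noteq> sqv 2" "sqv 1 \<noteq> sqv 2" unfolding sqv_def by (auto simp: fun_eq_iff)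
  obtain x where x: "\<forall>i<3. x i \<in> K" "\<exists>i<3. x i \<noteq> 0"
    "(\<Sum>\<alpha>\<in>{sqv 0, sqv 1, sqv 2}. c \<alpha> * (\<Prod>i<3. x i ^ \<alpha> i)) = 0"
  proof (rule C1_app[OF C1, of 2 3 c "{sqv 0, sqv 1, sqv 2}", THEN exE])
    show "\<forall>\<alpha>. c \<alpha> \<in> K" using K a e by (auto simp: c_def sf_0 sf_1 sf_uminus)
    show "{sqv 0, sqv 1, sqv 2} \<subseteq> homog_monos 3 2" using sqv_homog by auto
    show "\<forall>\<alpha>. \<alpha> \<notin> {sqv 0, sqv 1, sqv 2} \<longrightarrow> c \<alpha> = 0" by (auto simp: c_def)
  qed auto
  have "(\<Sum>\<alpha>\<in>{sqv 0, sqv 1, sqv 2}. c \<alpha> * (\<Prod>i<3. x i ^ \<alpha> i)) = x 0 ^ 2 - a * x 1 ^ 2 - e * x 2 ^ 2"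
    using d by (simp add: c_def prod3 sqv_def)
  then have eq: "x 0 ^ 2 - a * x 1 ^ 2 - e * x 2 ^ 2 = 0" using x by simp
  have x2: "x 2 \<noteq> 0"
  proof
    assume z: "x 2 = 0"
    then have eq': "x 0 ^ 2 = a * x 1 ^ 2" using eq by simp
    show False
    proof (cases "x 1 = 0")
      case True
      then have "x 0 = 0" using eq' by simp
      obtain i where i: "i < 3" "x i \<noteq> 0" using x(2) by blast
      then have "i = 0 \<or> i = 1 \<or> i = 2" by auto
      then show False using i \<open>x 0 = 0\<close> True z by auto
    next
      case False
      then have "a = (x 0 / x 1) ^ 2" using eq' by (simp add: power_divide)
      moreover have "x 0 / x 1 \<in> K" using x(1) K by (auto intro: sf_divide)
      ultimately show False using ns by blast
    qed
  qed
  have "(x 0 / x 2) ^ 2 - a * (x 1 / x 2) ^ 2 = e"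
    using eq x2 by (simp add: power_divide field_simps)
  moreover have "x 0 / x 2 \<in> K" "x 1 / x 2 \<in> K" using x(1) K by (auto intro: sf_divide)
  ultimately show ?thesis by blast
qed

lemma quad4_point:
  assumes K: "subfield K" and C1: "C1_field K" and cK: "a \<in> K" "al \<in> K" "be \<in> K" "ga \<in> K"
  shows "\<exists>x::nat\<Rightarrow>'a::field. (\<forall>i<4. x i \<in> K) \<and> (\<exists>i<4. x i \<noteq> 0) \<and>
     x 0 ^ 2 - a * x 1 ^ 2 - al * x 2 ^ 2 - be * x 2 * x 3 - ga * x 3 ^ 2 = 0"
proof -
  define c where "c \<alpha> = (if \<alpha> = sqv 0 then 1 else if \<alpha> = sqv 1 then - a else if \<alpha> = sqv 2 then - al
     else if \<alpha> = prv 2 3 then - be else if \<alpha> = sqv 3 then - ga else 0)" for \<alpha>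
  have d: "sqv 0 \<noteq> sqv 1" "sqv 0 \<noteq> sqv 2" "sqv 1 \<noteq> sqv 2" "sqv 0 \<noteq> sqv 3" "sqv 1 \<noteq> sqv 3" "sqv 2 \<noteq> sqv 3"
    "prv 2 3 \<noteq> sqv 0" "prv 2 3 \<noteq> sqv 1" "prv 2 3 \<noteq> sqv 2" "prv 2 3 \<noteq> sqv 3"
    unfolding sqv_def prv_def by (auto simp: fun_eq_iff)
  obtain x where x: "\<forall>i<4. x i \<in> K" "\<exists>i<4. x i \<noteq> 0"
    "(\<Sum>\<alpha>\<in>{sqv 0, sqv 1, sqv 2, prv 2 3, sqv 3}. c \<alpha> * (\<Prod>i<4. x i ^ \<alpha> i)) = 0"
  proof (rule C1_app[OF C1, of 2 4 c "{sqv 0, sqv 1, sqv 2, prv 2 3, sqv 3}", THEN exE])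
    show "\<forall>\<alpha>. c \<alpha> \<in> K" using K cK by (auto simp: c_def sf_0 sf_1 sf_uminus)
    show "{sqv 0, sqv 1, sqv 2, prv 2 3, sqv 3} \<subseteq> homog_monos 4 2" using sqv_homog prv_homog by auto
    show "\<forall>\<alpha>. \<alpha> \<notin> {sqv 0, sqv 1, sqv 2, prv 2 3, sqv 3} \<longrightarrow> c \<alpha> = 0" by (auto simp: c_def)
  qed auto
  have "(\<Sum>\<alpha>\<in>{sqv 0, sqv 1, sqv 2, prv 2 3, sqv 3}. c \<alpha> * (\<Prod>i<4. x i ^ \<alpha> i)) =
     x 0 ^ 2 - a * x 1 ^ 2 - al * x 2 ^ 2 - be * x 2 * x 3 - ga * x 3 ^ 2"
    using d by (simp add: c_def prod4 sqv_def prv_def algebra_simps)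
  then show ?thesis using x by auto
qed



lemma in_genK: "x \<in> K \<Longrightarrow> x \<in> gen_field K S" using gen_field_K by blast
lemma in_genS: "x \<in> S \<Longrightarrow> x \<in> gen_field K S" using gen_field_S by blast

lemma conic_param:
  fixes a p q e X Y :: "'a::field"
  assumes two: "(2::'a) \<noteq> 0" and pq: "p ^ 2 - a * q ^ 2 = e" and e: "e \<noteq> 0"
    and XY: "X ^ 2 - a * Y ^ 2 = e" and Xp: "X \<noteq> p"
  defines "\<sigma> \<equiv> (Y - q) / (X - p)"
  shows "1 - a * \<sigma> ^ 2 \<noteq> 0" and "X = p + (2 * a * q * \<sigma> - 2 * p) / (1 - a * \<sigma> ^ 2)"
    and "Y = q + \<sigma> * (X - p)"
proof -
  define r where "r = X - p"
  have r0: "r \<noteq> 0" using Xp unfolding r_def by simp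
  have Yq: "Y = q + \<sigma> * r" unfolding \<sigma>_def r_def using Xp by simp
  have X: "X = p + r" unfolding r_def by simp
  have "(p + r) ^ 2 - a * (q + \<sigma> * r) ^ 2 = p ^ 2 - a * q ^ 2" using XY pq X Yq by simp
  then have "r * (2 * p + r - 2 * a * q * \<sigma> - a * \<sigma> ^ 2 * r) = 0"
    by (simp add: power2_eq_square algebra_simps)
  then have E: "2 * p + r - 2 * a * q * \<sigma> - a * \<sigma> ^ 2 * r = 0" using r0 by simp
  have "r * (1 - a * \<sigma> ^ 2) - (2 * a * q * \<sigma> - 2 * p) = 2 * p + r - 2 * a * q * \<sigma> - a * \<sigma> ^ 2 * r"
    by (simp add: algebra_simps)
  then have key: "r * (1 - a * \<sigma> ^ 2) = 2 * a * q * \<sigma> - 2 * p" using E by simp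
  show h: "1 - a * \<sigma> ^ 2 \<noteq> 0"
  proof
    assume h0: "1 - a * \<sigma> ^ 2 = 0"
    have k0: "2 * a * q * \<sigma> - 2 * p = 0" using key h0 by simp
    have "2 * (a * q * \<sigma>) = 2 * p" using k0 by (simp add: mult.assoc)
    then have aq: "a * q * \<sigma> = p" using two by (metis mult_cancel_left)
    have as: "a * \<sigma> ^ 2 = 1" using h0 by simp
    have "q = p * \<sigma>" using aq as by (metis mult.assoc mult.commute mult.right_neutral power2_eq_square)
    then have "e = p ^ 2 * (1 - a * \<sigma> ^ 2)" using pq by (simp add: algebra_simps power2_eq_square)
    then show False using h0 e by simp
  qed
  show "X = p + (2 * a * q * \<sigma> - 2 * p) / (1 - a * \<sigma> ^ 2)"
    using key h X by (simp add: field_simps)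
  show "Y = q + \<sigma> * (X - p)" using Yq unfolding r_def .
qed

lemma conic_eq_p:
  fixes a p q X Y :: "'a::field"
  assumes K: "subfield K" and ns: "\<not> (\<exists>y\<in>K. a = y ^ 2)"
    and pq: "p ^ 2 - a * q ^ 2 = X ^ 2 - a * Y ^ 2" and Xp: "X = p"
  shows "Y = q \<or> Y = - q"
proof -
  have a0: "a \<noteq> 0" using ns sf_0[OF K] by force
  have "a * (Y ^ 2 - q ^ 2) = 0" using pq Xp by (simp add: algebra_simps)
  then have "Y ^ 2 - q ^ 2 = 0" using a0 by simp
  then have "Y ^ 2 = q ^ 2" by simp
  then show ?thesis by (simp add: power2_eq_iff)
qed

lemma contra_const:
  assumes K: "subfield K" and ind: "alg_indep K [x1, x2]"
    and x1: "x1 \<in> gen_field K S" and x2: "x2 \<in> gen_field K S" and S: "S \<subseteq> gen_field K {w, 0}"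
  shows False
proof (rule contra_rel[OF K ind x1 x2 S, of "{(0,1)}" "\<lambda>_. 1"])
  show "\<forall>b\<in>{(0, 1)}. (1::'a) \<in> K" using sf_1[OF K] by simp
qed auto

lemma conic_fiber:
  fixes a \<kappa> s X Y :: "'a::field"
  assumes K: "subfield K" and C1: "C1_field K" and a: "a \<in> K" and ns: "\<not> (\<exists>y\<in>K. a = y ^ 2)"
    and two: "(2::'a) \<noteq> 0" and \<kappa>: "\<kappa> \<in> K" "\<kappa> \<noteq> 0" and XY: "X ^ 2 - a * Y ^ 2 = \<kappa>"
    and ind: "alg_indep K [x1, x2]" and x1: "x1 \<in> gen_field K {s, X, Y}" and x2: "x2 \<in> gen_field K {s, X, Y}"
  shows "\<exists>u v. gen_field K {s, X, Y} = gen_field K {u, v} \<and> alg_indep K [u, v]"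
proof -
  obtain p q where p: "p \<in> K" and q: "q \<in> K" and pq: "p ^ 2 - a * q ^ 2 = \<kappa>"
    using conic_point[OF K C1 a ns \<kappa>] by blast
  show ?thesis
  proof (cases "X = p")
    case True
    have e: "p ^ 2 - a * q ^ 2 = X ^ 2 - a * Y ^ 2" by (simp only: pq XY)
    have "Y = q \<or> Y = - q" using conic_eq_p[OF K ns e True] .
    then have "Y \<in> K" using q sf_uminus[OF K] by auto
    then have "{s, X, Y} \<subseteq> gen_field K {s, 0}" using True p by (auto intro: in_genK in_genS)
    then show ?thesis using contra_const[OF K ind x1 x2] by blast
  next
    case False
    define \<sigma> where "\<sigma> = (Y - q) / (X - p)"
    note cp = conic_param[OF two pq \<kappa>(2) XY False, folded \<sigma>_def]
    let ?G = "gen_field K {s, \<sigma>}"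
    have sfG: "subfield ?G" by (rule gen_field_sf)
    have mem: "s \<in> ?G" "\<sigma> \<in> ?G" "a \<in> ?G" "p \<in> ?G" "q \<in> ?G" "2 \<in> ?G" "1 \<in> ?G"
      using a p q sf_2[OF K] sf_1[OF K] by (auto intro: in_genK in_genS)
    have XG: "X \<in> ?G" unfolding cp(2) using mem by (intro sf_rules[OF sfG] ; simp)+
    have YG: "Y \<in> ?G" unfolding cp(3) using mem XG by (intro sf_rules[OF sfG] ; simp)+
    let ?H = "gen_field K {s, X, Y}"
    have sfH: "subfield ?H" by (rule gen_field_sf)
    have memH: "s \<in> ?H" "X \<in> ?H" "Y \<in> ?H" "p \<in> ?H" "q \<in> ?H"
      using p q by (auto intro: in_genK in_genS)
    have \<sigma>H: "\<sigma> \<in> ?H" unfolding \<sigma>_def using memH by (intro sf_rules[OF sfH] ; simp)+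
    have eq: "?H = ?G"
      by (rule gen_field_eq) (use mem XG YG memH \<sigma>H in auto)
    show ?thesis using final_indep[OF K ind] x1 x2 unfolding eq by blast
  qed
qed


lemma idx: assumes "k < (4::nat)" "j < 4" "k \<noteq> j"
  shows "\<exists>j1 j2. j1 < 4 \<and> j2 < 4 \<and> (\<forall>i<4. i = k \<or> i = j \<or> i = j1 \<or> i = j2)"
proof (intro exI conjI)
  let ?j1 = "if k \<noteq> 0 \<and> j \<noteq> 0 then 0 else if k \<noteq> 1 \<and> j \<noteq> 1 then 1 else (2::nat)"
  let ?j2 = "if k \<noteq> 3 \<and> j \<noteq> 3 then 3 else if k \<noteq> 2 \<and> j \<noteq> 2 then 2 else (1::nat)"
  show "?j1 < 4" "?j2 < 4" by auto
  have k: "k = 0 \<or> k = 1 \<or> k = 2 \<or> k = 3" and j: "j = 0 \<or> j = 1 \<or> j = 2 \<or> j = 3" using assms by auto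
  show "\<forall>i<4. i = k \<or> i = j \<or> i = ?j1 \<or> i = ?j2"
  proof (intro allI impI)
    fix i :: nat assume "i < 4"
    then have "i = 0 \<or> i = 1 \<or> i = 2 \<or> i = 3" by auto
    then show "i = k \<or> i = j \<or> i = ?j1 \<or> i = ?j2" using k j assms(3) by auto
  qed
qed


definition Qf :: "'a::field \<Rightarrow> 'a \<Rightarrow> 'a \<Rightarrow> 'a \<Rightarrow> (nat \<Rightarrow> 'a) \<Rightarrow> 'a" where
  "Qf a al be ga v = v 0 ^ 2 - a * v 1 ^ 2 - al * v 2 ^ 2 - be * v 2 * v 3 - ga * v 3 ^ 2"

definition Bf2 :: "'a::field \<Rightarrow> 'a \<Rightarrow> 'a \<Rightarrow> 'a \<Rightarrow> (nat \<Rightarrow> 'a) \<Rightarrow> (nat \<Rightarrow> 'a) \<Rightarrow> 'a" where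
  "Bf2 a al be ga v w = 2 * v 0 * w 0 - 2 * a * v 1 * w 1 - 2 * al * v 2 * w 2
     - be * (v 2 * w 3 + v 3 * w 2) - 2 * ga * v 3 * w 3"

lemma Qf_shift: "Qf a al be ga (\<lambda>i. v i + t * w i) = Qf a al be ga v + t * Bf2 a al be ga v w + t ^ 2 * Qf a al be ga w"
  unfolding Qf_def Bf2_def by (simp add: algebra_simps power2_eq_square)

lemma Bf2_shift: "Bf2 a al be ga (\<lambda>i. v i - t * w i) u = Bf2 a al be ga v u - t * Bf2 a al be ga w u"
  unfolding Bf2_def by (simp add: algebra_simps)

lemma Bf2_self: "Bf2 a al be ga w w = 2 * Qf a al be ga w"
  unfolding Qf_def Bf2_def by (simp add: algebra_simps power2_eq_square)

lemma Qf_scale: "Qf a al be ga (\<lambda>i. v i / c) = Qf a al be ga v / c ^ 2"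
  unfolding Qf_def by (simp add: power_divide diff_divide_distrib mult.assoc) (simp add: power2_eq_square)

lemma Bf2_scale: "Bf2 a al be ga (\<lambda>i. v i / c) w = Bf2 a al be ga v w / c"
  unfolding Bf2_def by (cases "c = 0") (simp_all add: field_simps)

lemma Bf2_zero: "v 0 = 0 \<Longrightarrow> v 1 = 0 \<Longrightarrow> v 2 = 0 \<Longrightarrow> v 3 = 0 \<Longrightarrow> Bf2 a al be ga v w = 0"
  unfolding Bf2_def by simp

lemma Qf_mem: "subfield F \<Longrightarrow> a \<in> F \<Longrightarrow> al \<in> F \<Longrightarrow> be \<in> F \<Longrightarrow> ga \<in> F \<Longrightarrow> (\<And>i. i < 4 \<Longrightarrow> v i \<in> F)
  \<Longrightarrow> Qf a al be ga v \<in> F"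
  unfolding Qf_def by (intro sf_rules; simp)+

lemma Bf2_mem: "subfield F \<Longrightarrow> a \<in> F \<Longrightarrow> al \<in> F \<Longrightarrow> be \<in> F \<Longrightarrow> ga \<in> F \<Longrightarrow> (\<And>i. i < 4 \<Longrightarrow> v i \<in> F)
  \<Longrightarrow> (\<And>i. i < 4 \<Longrightarrow> w i \<in> F) \<Longrightarrow> Bf2 a al be ga v w \<in> F"
  unfolding Bf2_def by (intro sf_rules; simp add: sf_2)+

lemma proj_case:
  fixes a al be ga :: "'a::field" and X P0 :: "nat \<Rightarrow> 'a"
  assumes K: "subfield K" and cK: "a \<in> K" "al \<in> K" "be \<in> K" "ga \<in> K"
    and P0K: "\<And>i. i < 4 \<Longrightarrow> P0 i \<in> K" and QP0: "Qf a al be ga P0 = 0"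
    and QX: "Qf a al be ga X = 0" and m: "Bf2 a al be ga X P0 \<noteq> 0"
    and k: "k < 4" "P0 k \<noteq> 0"
    and XG: "\<And>i. i < 4 \<Longrightarrow> X i \<in> gen_field K S" and X3: "X 3 = 1"
    and SX: "S \<subseteq> {X 0, X 1, X 2}"
    and ind: "alg_indep K [x1, x2]" and x1: "x1 \<in> gen_field K S" and x2: "x2 \<in> gen_field K S"
  shows "\<exists>u v. gen_field K S = gen_field K {u, v} \<and> alg_indep K [u, v]"
proof -
  let ?Q = "Qf a al be ga" and ?B = "Bf2 a al be ga"
  define m2 where "m2 = ?B X P0"
  define \<tau> where "\<tau> = X k / P0 k"
  define \<pi> where "\<pi> = (\<lambda>i. X i - \<tau> * P0 i)"
  have \<pi>k: "\<pi> k = 0" unfolding \<pi>_def \<tau>_def using k by simp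
  have Xpi: "X = (\<lambda>i. \<pi> i + \<tau> * P0 i)" unfolding \<pi>_def by simp
  have Bpi: "?B \<pi> P0 = m2"
    unfolding m2_def \<pi>_def by (simp add: Bf2_shift Bf2_self QP0)
  have "?Q X = ?Q \<pi> + \<tau> * ?B \<pi> P0 + \<tau> ^ 2 * ?Q P0"
    by (subst Xpi) (rule Qf_shift)
  then have Qpi: "?Q \<pi> = - \<tau> * m2" using QX QP0 Bpi by (simp add: eq_neg_iff_add_eq_0)
  have "\<exists>j<4. \<pi> j \<noteq> 0"
  proof (rule ccontr)
    assume "\<not> (\<exists>j<4. \<pi> j \<noteq> 0)"
    then have "?B \<pi> P0 = 0" by (intro Bf2_zero) auto
    then show False using Bpi m unfolding m2_def by simp
  qed
  then obtain j where j: "j < 4" "\<pi> j \<noteq> 0" by blast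
  have kj: "k \<noteq> j" using \<pi>k j by auto
  define \<pi>t where "\<pi>t i = \<pi> i / \<pi> j" for i
  define W where "W i = \<pi>t i - (?Q \<pi>t / ?B \<pi>t P0) * P0 i" for i
  have m2nz: "m2 \<noteq> 0" using m unfolding m2_def .
  have QT: "?Q \<pi>t = ?Q \<pi> / \<pi> j ^ 2" unfolding \<pi>t_def by (rule Qf_scale)
  have BT: "?B \<pi>t P0 = m2 / \<pi> j" unfolding \<pi>t_def Bf2_scale Bpi ..
  have WX: "W i = X i / \<pi> j" for i
  proof -
    have r: "?Q \<pi>t / ?B \<pi>t P0 = - \<tau> / \<pi> j" unfolding QT BT Qpi using j(2) m2nz
      by (simp add: field_simps power2_eq_square)
    have "W i = \<pi> i / \<pi> j - (- \<tau> / \<pi> j) * P0 i" by (simp only: W_def r \<pi>t_def)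
    also have "\<dots> = (\<pi> i + \<tau> * P0 i) / \<pi> j" using j(2) by (simp add: field_simps)
    also have "\<pi> i + \<tau> * P0 i = X i" unfolding \<pi>_def by simp
    finally show ?thesis .
  qed
  have W3: "W 3 \<noteq> 0" using WX[of 3] X3 j(2) by simp
  have XW: "X i = W i / W 3" for i using WX[of i] WX[of 3] X3 j(2) by simp
  obtain j1 j2 where jj: "j1 < 4" "j2 < 4" "\<forall>i<4. i = k \<or> i = j \<or> i = j1 \<or> i = j2"
    using idx[OF k(1) j(1) kj] by blast
  define u where "u = \<pi>t j1"
  define v where "v = \<pi>t j2"
  let ?H = "gen_field K {u, v}"
  have sfH: "subfield ?H" by (rule gen_field_sf)
  have KH: "x \<in> K \<Longrightarrow> x \<in> ?H" for x by (rule in_genK)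
  have \<pi>tH: "\<pi>t i \<in> ?H" if "i < 4" for i
  proof -
    have "i = k \<or> i = j \<or> i = j1 \<or> i = j2" using jj that by auto
    moreover have "\<pi>t k \<in> ?H" unfolding \<pi>t_def \<pi>k using sf_0[OF sfH] by simp
    moreover have "\<pi>t j \<in> ?H" unfolding \<pi>t_def using j(2) sf_1[OF sfH] by simp
    moreover have "\<pi>t j1 \<in> ?H" "\<pi>t j2 \<in> ?H" unfolding u_def[symmetric] v_def[symmetric] by (auto intro: in_genS)
    ultimately show ?thesis by auto
  qed
  have cH: "a \<in> ?H" "al \<in> ?H" "be \<in> ?H" "ga \<in> ?H" using cK by (auto intro: KH)
  have P0H: "i < 4 \<Longrightarrow> P0 i \<in> ?H" for i using P0K KH by blast
  have QH: "?Q \<pi>t \<in> ?H" by (rule Qf_mem[OF sfH cH]) (rule \<pi>tH)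
  have BH: "?B \<pi>t P0 \<in> ?H" by (rule Bf2_mem[OF sfH cH]) (auto intro: \<pi>tH P0H)
  have WH: "W i \<in> ?H" if "i < 4" for i
    unfolding W_def
    by (intro sf_diff[OF sfH] sf_mult[OF sfH] sf_divide[OF sfH] QH BH \<pi>tH P0H that)
  have XH: "X i \<in> ?H" if "i < 4" for i
    unfolding XW by (intro sf_rules[OF sfH] WH that) simp
  let ?G = "gen_field K S"
  have sfG: "subfield ?G" by (rule gen_field_sf)
  have \<tau>G: "\<tau> \<in> ?G" unfolding \<tau>_def using XG k P0K by (intro sf_rules[OF sfG]) (auto intro: in_genK)
  have \<pi>G: "\<pi> i \<in> ?G" if "i < 4" for i
    unfolding \<pi>_def using XG that P0K \<tau>G by (intro sf_rules[OF sfG]) (auto intro: in_genK)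
  have uG: "u \<in> ?G" "v \<in> ?G" unfolding u_def v_def \<pi>t_def
    by (rule sf_divide[OF sfG]; rule \<pi>G; use jj j in simp)+
  have eq: "?G = ?H"
  proof (rule gen_field_eq)
    show "S \<subseteq> ?H" using SX XH by auto
    show "{u, v} \<subseteq> ?G" using uG by auto
  qed
  show ?thesis using final_indep[OF K ind] x1 x2 unfolding eq by blast
qed



lemma surface:
  fixes a al be ga s x y :: "'a::field"
  assumes K: "subfield K" and C1: "C1_field K" and a: "a \<in> K" and ns: "\<not> (\<exists>y\<in>K. a = y ^ 2)"
    and two: "(2::'a) \<noteq> 0" and cK: "al \<in> K" "be \<in> K" "ga \<in> K" and nz: "al \<noteq> 0 \<or> be \<noteq> 0 \<or> ga \<noteq> 0"
    and eq: "x ^ 2 - a * y ^ 2 = al * s ^ 2 + be * s + ga"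
    and ind: "alg_indep K [x1, x2]" and x1: "x1 \<in> gen_field K {x, y, s}" and x2: "x2 \<in> gen_field K {x, y, s}"
  shows "\<exists>u v. gen_field K {x, y, s} = gen_field K {u, v} \<and> alg_indep K [u, v]"
proof -
  obtain P0 :: "nat \<Rightarrow> 'a" where P0K: "\<forall>i<4. P0 i \<in> K" and P0nz: "\<exists>i<4. P0 i \<noteq> 0"
    and QP0': "P0 0 ^ 2 - a * P0 1 ^ 2 - al * P0 2 ^ 2 - be * P0 2 * P0 3 - ga * P0 3 ^ 2 = 0"
    using quad4_point[OF K C1 a cK] by blast
  have QP0: "Qf a al be ga P0 = 0" unfolding Qf_def using QP0' .
  define X where "X = (\<lambda>i::nat. if i = 0 then x else if i = 1 then y else if i = 2 then s else 1)"
  have QX: "Qf a al be ga X = 0" unfolding Qf_def X_def using eq by (simp add: algebra_simps)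
  let ?G = "gen_field K {x, y, s}"
  have sfG: "subfield ?G" by (rule gen_field_sf)
  have XG: "X i \<in> ?G" if "i < 4" for i
    unfolding X_def using sf_1[OF sfG] by (auto intro: in_genS)
  have a0: "a \<noteq> 0" using ns sf_0[OF K] by force
  have P0K': "\<And>i. i < 4 \<Longrightarrow> P0 i \<in> K" using P0K by blast
  define x0 where "x0 = P0 0"
  define y0 where "y0 = P0 1"
  define s0 where "s0 = P0 2"
  define z0 where "z0 = P0 3"
  have K0: "x0 \<in> K" "y0 \<in> K" "s0 \<in> K" "z0 \<in> K" unfolding x0_def y0_def s0_def z0_def using P0K by auto
  have K2: "2 \<in> K" using sf_2[OF K] .
  have four: "(4::'a) \<noteq> 0"
  proof -
    have "(4::'a) = 2 * 2" by simp
    then show ?thesis using two by (metis mult_eq_0_iff)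
  qed
  show ?thesis
  proof (cases "Bf2 a al be ga X P0 = 0")
    case False
    obtain k where k: "k < 4" "P0 k \<noteq> 0" using P0nz by blast
    show ?thesis
      by (rule proj_case[OF K a cK P0K' QP0 QX False k XG _ _ ind x1 x2]) (auto simp: X_def)
  next
    case True
    then have mz: "2 * x * x0 - 2 * a * y * y0 - 2 * al * s * s0 - be * (s * z0 + s0) - 2 * ga * z0 = 0"
      unfolding Bf2_def X_def x0_def y0_def s0_def z0_def by simp
    show ?thesis
    proof (cases "x0 = 0")
      case False
      define D where "D = 2 * x0"
      define l1 where "l1 = 2 * a * y0 / D"
      define l2 where "l2 = (2 * al * s0 + be * z0) / D"
      define l3 where "l3 = (be * s0 + 2 * ga * z0) / D"
      have lK: "l1 \<in> K" "l2 \<in> K" "l3 \<in> K" unfolding l1_def l2_def l3_def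
        using K0 a cK K2 unfolding D_def by (intro sf_rules[OF K]; simp)+
      have h: "x * (2 * x0) = 2 * a * y * y0 + 2 * al * s * s0 + be * (s * z0 + s0) + 2 * ga * z0"
        using mz by algebra
      have n2: "D \<noteq> 0" using two False unfolding D_def by simp
      have "x = (2 * a * y * y0 + 2 * al * s * s0 + be * (s * z0 + s0) + 2 * ga * z0) / D"
        using h n2 unfolding D_def by (simp add: eq_divide_eq)
      also have "\<dots> = l1 * y + l2 * s + l3"
        using n2 unfolding l1_def l2_def l3_def by (simp add: field_simps)
      finally have xe: "x = l1 * y + l2 * s + l3" .
      have rel: "(l1 ^ 2 - a) * y ^ 2 + (2 * l1 * l2) * y * s + (2 * l1 * l3) * y + (l2 ^ 2 - al) * s ^ 2
          + (2 * l2 * l3 - be) * s + (l3 ^ 2 - ga) = 0"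
      proof -
        have "(l1 ^ 2 - a) * y ^ 2 + (2 * l1 * l2) * y * s + (2 * l1 * l3) * y + (l2 ^ 2 - al) * s ^ 2
          + (2 * l2 * l3 - be) * s + (l3 ^ 2 - ga) = x ^ 2 - a * y ^ 2 - (al * s ^ 2 + be * s + ga)"
          unfolding xe by (simp add: algebra_simps power2_eq_square)
        then show ?thesis using eq by simp
      qed
      have c20: "l1 ^ 2 - a \<noteq> 0" using ns lK(1) by auto
      have S: "{x, y, s} \<subseteq> gen_field K {y, s}"
      proof -
        have sf: "subfield (gen_field K {y, s})" by (rule gen_field_sf)
        have "x \<in> gen_field K {y, s}" unfolding xe using lK
          by (intro sf_rules[OF sf]; auto intro: in_genK in_genS)
        then show ?thesis by (auto intro: in_genS)
      qed
      show ?thesis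
        by (rule FalseE, rule contra_quad[OF K ind x1 x2 S _ _ _ _ _ _ _ rel])
          (use lK a cK K2 c20 in \<open>auto intro!: sf_rules[OF K]\<close>)
    next
      case x00: True
      show ?thesis
      proof (cases "y0 = 0")
        case False
        define D where "D = 2 * a * y0"
        define m2 where "m2 = - (2 * al * s0 + be * z0) / D"
        define m3 where "m3 = - (be * s0 + 2 * ga * z0) / D"
        have mK: "m2 \<in> K" "m3 \<in> K" unfolding m2_def m3_def D_def
          using K0 a cK K2 by (intro sf_rules[OF K]; simp)+
        have h: "y * (2 * a * y0) = - (2 * al * s0 + be * z0) * s - (be * s0 + 2 * ga * z0)"
          using mz x00 by algebra
        have n2: "D \<noteq> 0" using two False a0 unfolding D_def by simp
        have "y = (- (2 * al * s0 + be * z0) * s - (be * s0 + 2 * ga * z0)) / D"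
          using h n2 unfolding D_def by (simp add: eq_divide_eq)
        also have "\<dots> = m2 * s + m3"
          using n2 unfolding m2_def m3_def by (simp add: field_simps)
        finally have ye: "y = m2 * s + m3" .
        have rel: "1 * x ^ 2 + 0 * x * s + 0 * x + (- a * m2 ^ 2 - al) * s ^ 2
          + (- 2 * a * m2 * m3 - be) * s + (- a * m3 ^ 2 - ga) = 0"
        proof -
          have "1 * x ^ 2 + 0 * x * s + 0 * x + (- a * m2 ^ 2 - al) * s ^ 2
            + (- 2 * a * m2 * m3 - be) * s + (- a * m3 ^ 2 - ga) = x ^ 2 - a * y ^ 2 - (al * s ^ 2 + be * s + ga)"
            unfolding ye by (simp add: algebra_simps power2_eq_square)
          then show ?thesis using eq by simp
        qed
        have S: "{x, y, s} \<subseteq> gen_field K {x, s}"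
        proof -
          have sf: "subfield (gen_field K {x, s})" by (rule gen_field_sf)
          have "y \<in> gen_field K {x, s}" unfolding ye using mK
            by (intro sf_rules[OF sf]; auto intro: in_genK in_genS)
          then show ?thesis by (auto intro: in_genS)
        qed
        show ?thesis
          by (rule FalseE, rule contra_quad[OF K ind x1 x2 S _ _ _ _ _ _ _ rel])
            (use mK a cK K2 sf_0[OF K] sf_1[OF K] in \<open>auto intro!: sf_rules[OF K]\<close>)
      next
        case y00: True
        define L2 where "L2 = 2 * al * s0 + be * z0"
        define L3 where "L3 = be * s0 + 2 * ga * z0"
        have LK: "L2 \<in> K" "L3 \<in> K" unfolding L2_def L3_def
          using K0 cK K2 by (intro sf_rules[OF K]; simp)+
        have Le: "L2 * s + L3 = 0" using mz x00 y00 unfolding L2_def L3_def by algebra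
        show ?thesis
        proof (cases "L2 = 0")
          case False
          have "s * L2 = - L3" using Le by algebra
          then have se: "s = (- L3) / L2" using False by (metis nonzero_mult_div_cancel_right)
          have sK: "s \<in> K" unfolding se using LK by (intro sf_rules[OF K]; simp)+
          define g where "g = al * s ^ 2 + be * s + ga"
          have gK: "g \<in> K" unfolding g_def using sK cK by (intro sf_rules[OF K]; simp)+
          have rel: "1 * x ^ 2 + 0 * x * y + 0 * x + (- a) * y ^ 2 + 0 * y + (- g) = 0"
            using eq unfolding g_def by simp
          have S: "{x, y, s} \<subseteq> gen_field K {x, y}" using sK by (auto intro: in_genK in_genS)
          show ?thesis
            by (rule FalseE, rule contra_quad[OF K ind x1 x2 S _ _ _ _ _ _ _ rel])
              (use gK a K sf_0[OF K] sf_1[OF K] in \<open>auto intro!: sf_rules[OF K]\<close>)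
        next
          case L20: True
          have L30: "L3 = 0" using Le L20 by simp
          have sz: "s0 \<noteq> 0 \<or> z0 \<noteq> 0"
          proof -
            obtain i where i: "i < 4" "P0 i \<noteq> 0" using P0nz by blast
            then have "i = 0 \<or> i = 1 \<or> i = 2 \<or> i = 3" by auto
            then show ?thesis using i x00 y00 unfolding x0_def y0_def s0_def z0_def by auto
          qed
          show ?thesis
          proof (cases "z0 = 0")
            case True
            then have "s0 \<noteq> 0" using sz by simp
            then have al0: "al = 0" and be0: "be = 0"
              using L20 L30 True two unfolding L2_def L3_def by auto
            then have ga0: "ga \<noteq> 0" using nz by simp
            have XY: "x ^ 2 - a * y ^ 2 = ga" using eq al0 be0 by simp
            have set: "{s, x, y} = {x, y, s}" by auto
            show ?thesis using conic_fiber[OF K C1 a ns two cK(3) ga0 XY ind, where s=s, unfolded set] x1 x2 by blast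
          next
            case False
            define s1 where "s1 = s0 / z0"
            have s1K: "s1 \<in> K" unfolding s1_def using K0 by (intro sf_rules[OF K])
            have h1: "be * z0 = - (2 * al * s0)" using L20 unfolding L2_def by algebra
            have bee: "be = - 2 * al * s1" unfolding s1_def using h1 False by (simp add: field_simps)
            have h3: "2 * (ga * z0) = 2 * (al * s1 * s0)" using L30 bee unfolding L3_def by algebra
            then have h4: "ga * z0 = al * s1 * s0" using two by simp
            have gae: "ga = al * s1 ^ 2" using h4 False unfolding s1_def
              by (simp add: field_simps power2_eq_square)
            have al0: "al \<noteq> 0" using nz bee gae by auto
            have geq: "x ^ 2 - a * y ^ 2 = al * (s - s1) ^ 2" using eq bee gae
              by (simp add: algebra_simps power2_eq_square)
            show ?thesis
            proof (cases "s = s1")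
              case True
              have rel: "1 * x ^ 2 + 0 * x * y + 0 * x + (- a) * y ^ 2 + 0 * y + 0 = 0"
                using geq True by simp
              have S: "{x, y, s} \<subseteq> gen_field K {x, y}" using s1K True by (auto intro: in_genK in_genS)
              show ?thesis
                by (rule FalseE, rule contra_quad[OF K ind x1 x2 S _ _ _ _ _ _ _ rel])
                  (use a K sf_0[OF K] sf_1[OF K] in \<open>auto intro!: sf_rules[OF K]\<close>)
            next
              case False
              define X' where "X' = x / (s - s1)"
              define Y' where "Y' = y / (s - s1)"
              have XY: "X' ^ 2 - a * Y' ^ 2 = al" using geq False unfolding X'_def Y'_def
                by (simp add: power_divide field_simps)
              let ?H = "gen_field K {s, X', Y'}"
              have sfH: "subfield ?H" by (rule gen_field_sf)
              have xH: "x \<in> ?H" "y \<in> ?H" "s \<in> ?H"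
              proof -
                have "x = X' * (s - s1)" "y = Y' * (s - s1)" using False unfolding X'_def Y'_def by simp_all
                then show "x \<in> ?H" "y \<in> ?H" using s1K
                  by (simp_all, (intro sf_rules[OF sfH]; auto intro: in_genK in_genS)+)
                show "s \<in> ?H" by (auto intro: in_genS)
              qed
              have XG': "X' \<in> ?G" "Y' \<in> ?G" unfolding X'_def Y'_def using s1K
                by (intro sf_rules[OF sfG]; auto intro: in_genK in_genS)+
              have eqG: "?G = ?H"
                by (rule gen_field_eq) (use xH XG' in \<open>auto intro: in_genS\<close>)
              show ?thesis using conic_fiber[OF K C1 a ns two cK(1) al0 XY ind] x1 x2 unfolding eqG by blast
            qed
          qed
        qed
      qed
    qed
  qed
qed



theorem lemma1p8:
  fixes K :: "'a::field set" and a b c d t1 t2 t3 t4 :: 'a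
  assumes "subfield K" and "infinite K" and "C1_field K" and "(2::'a) \<noteq> 0"
    and "\<not> alg_closed_in K"
    and "a \<in> K" and "\<not> (\<exists>y\<in>K. a = y ^ 2)"
    and "b \<in> K" and "c \<in> K" and "d \<in> K"
    and "b \<noteq> 0" and "c \<noteq> 0 \<or> d \<noteq> 0"
    and "has_trdeg K (gen_field K {t1, t2, t3, t4}) 2"
    and "t1 ^ 2 - a * t2 ^ 2 = b"
    and "t3 ^ 2 - a * t4 ^ 2 = 2 * c * t1 + d"
  shows "k_rational K (gen_field K {t1, t2, t3, t4})"
proof -
  note K = assms(1) and C1 = assms(3) and two = assms(4) and a = assms(6) and ns = assms(7)
    and b = assms(8) and c = assms(9) and d = assms(10) and b0 = assms(11) and cd = assms(12)
    and E1 = assms(14) and E2 = assms(15)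
  let ?L = "gen_field K {t1, t2, t3, t4}"
  obtain xs where xs: "length xs = 2" "set xs \<subseteq> ?L" "alg_indep K xs"
    using assms(13) unfolding has_trdeg_def by blast
  then obtain x1 x2 where xs2: "xs = [x1, x2]"
    by (metis (no_types, lifting) One_nat_def Suc_1 length_0_conv length_Suc_conv)
  have ind: "alg_indep K [x1, x2]" using xs xs2 by simp
  have x1: "x1 \<in> ?L" and x2: "x2 \<in> ?L" using xs xs2 by auto
  have K2: "2 \<in> K" using sf_2[OF K] .
  have a0: "a \<noteq> 0" using ns sf_0[OF K] by force
  have K4: "4 \<in> K" using sf_mult[OF K K2 K2] by simp
  have four: "(4::'a) \<noteq> 0"
  proof -
    have "(4::'a) = 2 * 2" by simp
    then show ?thesis using two by (metis mult_eq_0_iff)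
  qed
  obtain p q where p: "p \<in> K" and q: "q \<in> K" and pq: "p ^ 2 - a * q ^ 2 = b"
    using conic_point[OF K C1 a ns b b0] by blast
  show ?thesis
  proof (cases "t1 = p")
    case True
    have e: "p ^ 2 - a * q ^ 2 = t1 ^ 2 - a * t2 ^ 2" by (simp only: pq E1)
    have "t2 = q \<or> t2 = - q" using conic_eq_p[OF K ns e True] .
    then have t2K: "t2 \<in> K" using q sf_uminus[OF K] by auto
    have S: "{t1, t2, t3, t4} \<subseteq> gen_field K {t3, t4}" using True p t2K by (auto intro: in_genK in_genS)
    have rel: "1 * t3 ^ 2 + 0 * t3 * t4 + 0 * t3 + (- a) * t4 ^ 2 + 0 * t4 + (- (2 * c * p + d)) = 0"
      using E2 True by simp
    show ?thesis
      by (rule FalseE, rule contra_quad[OF K ind x1 x2 S _ _ _ _ _ _ _ rel])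
        (use a c d p K2 sf_0[OF K] sf_1[OF K] in \<open>auto intro!: sf_rules[OF K]\<close>)
  next
    case False
    define s where "s = (t2 - q) / (t1 - p)"
    note cp = conic_param[OF two pq b0 E1 False, folded s_def]
    define h where "h = 1 - a * s ^ 2"
    have h0: "h \<noteq> 0" using cp(1) unfolding h_def .
    define x where "x = t3 + a * s * t4"
    define y where "y = t4 + s * t3"
    define al where "al = - a * (2 * c * p + d)"
    define be where "be = 4 * a * c * q"
    define ga where "ga = d - 2 * c * p"
    have ht1: "h * t1 = h * p + (2 * a * q * s - 2 * p)"
      using cp(2) h0 unfolding h_def[symmetric] by (simp add: field_simps)
    have "x ^ 2 - a * y ^ 2 = h * (t3 ^ 2 - a * t4 ^ 2)"
      unfolding x_def y_def h_def by (simp add: algebra_simps power2_eq_square)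
    also have "\<dots> = 2 * c * (h * t1) + d * h" unfolding E2 by (simp add: algebra_simps)
    also have "\<dots> = 2 * c * (h * p + (2 * a * q * s - 2 * p)) + d * h" by (simp only: ht1)
    also have "\<dots> = al * s ^ 2 + be * s + ga"
      unfolding al_def be_def ga_def h_def by (simp add: algebra_simps power2_eq_square)
    finally have eqxy: "x ^ 2 - a * y ^ 2 = al * s ^ 2 + be * s + ga" .
    have cK: "al \<in> K" "be \<in> K" "ga \<in> K" unfolding al_def be_def ga_def
      using a c d p q K2 K4 by (intro sf_rules[OF K] ; simp?)+
    have nz: "al \<noteq> 0 \<or> be \<noteq> 0 \<or> ga \<noteq> 0"
    proof (rule ccontr)
      assume "\<not> (al \<noteq> 0 \<or> be \<noteq> 0 \<or> ga \<noteq> 0)"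
      then have z: "al = 0" "be = 0" "ga = 0" by auto
      have "2 * c * p + d = 0" using z(1) a0 unfolding al_def by simp
      moreover have "d = 2 * c * p" using z(3) unfolding ga_def by simp
      ultimately have "2 * (2 * (c * p)) = 0" by (simp add: algebra_simps)
      then have cp0: "c * p = 0" using two by (metis mult_eq_0_iff)
      then have d0: "d = 0" using \<open>d = 2 * c * p\<close> by simp
      then have c0: "c \<noteq> 0" using cd by simp
      then have p0: "p = 0" using cp0 by simp
      have "4 * (a * c * q) = 0" using z(2) unfolding be_def by (simp add: mult.assoc)
      then have "q = 0" using four a0 c0 by simp
      then show False using pq p0 b0 by simp
    qed
    let ?G = "gen_field K {x, y, s}"
    have sfG: "subfield ?G" by (rule gen_field_sf)
    have memG: "x \<in> ?G" "y \<in> ?G" "s \<in> ?G" "a \<in> ?G" "p \<in> ?G" "q \<in> ?G" "2 \<in> ?G"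
      using a p q K2 by (auto intro: in_genK in_genS)
    have hG: "h \<in> ?G" unfolding h_def using memG sf_1[OF sfG] by (intro sf_rules[OF sfG]; simp)+
    have t1G: "t1 \<in> ?G" unfolding cp(2) h_def[symmetric] using memG hG by (intro sf_rules[OF sfG]; simp)+
    have t2G: "t2 \<in> ?G" unfolding cp(3) using memG t1G by (intro sf_rules[OF sfG]; simp)+
    have t3e: "t3 = (x - a * s * y) / h" using h0 unfolding x_def y_def h_def
      by (simp add: field_simps power2_eq_square)
    have t4e: "t4 = (y - s * x) / h" using h0 unfolding x_def y_def h_def
      by (simp add: field_simps power2_eq_square)
    have t3G: "t3 \<in> ?G" unfolding t3e using memG hG by (intro sf_rules[OF sfG]; simp)+
    have t4G: "t4 \<in> ?G" unfolding t4e using memG hG by (intro sf_rules[OF sfG]; simp)+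
    have sfL: "subfield ?L" by (rule gen_field_sf)
    have memL: "t1 \<in> ?L" "t2 \<in> ?L" "t3 \<in> ?L" "t4 \<in> ?L" "a \<in> ?L" "p \<in> ?L" "q \<in> ?L"
      using a p q by (auto intro: in_genK in_genS)
    have sL: "s \<in> ?L" unfolding s_def using memL by (intro sf_rules[OF sfL]; simp)+
    have xL: "x \<in> ?L" "y \<in> ?L" unfolding x_def y_def using memL sL by (intro sf_rules[OF sfL]; simp)+
    have LG: "?L = ?G" by (rule gen_field_eq) (use t1G t2G t3G t4G sL xL in auto)
    obtain u v where uv: "?G = gen_field K {u, v}" "alg_indep K [u, v]"
      using surface[OF K C1 a ns two cK nz eqxy ind] x1 x2 unfolding LG by blast
    have "set [u, v] = {u, v}" by simp
    then show ?thesis unfolding k_rational_def LG using uv by metis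
  qed
qed


end
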